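(* Let $A$ be a commutative noetherian local ring, let $x,y\in A$ be an exact pair of zero divisors, and let $a\in A$. Then the $A$-modules $G_a$ and $H_a$ are totally reflexive, and $G_a\cong\operatorname{Hom}_A(H_a,A)$ and $H_a\cong\operatorname{Hom}_A(G_a,A)$.
   Context: Two non-units $x,y\in A$ form an exact pair of zero divisors if $\operatorname{Ann}_A(x)=(y)$ and $\operatorname{Ann}_A(y)=(x)$. For $a\in A$, let $\gamma_a=\begin{pmatrix} x & a\\ 0 & y\end{pmatrix}$ and $\eta_a=\begin{pmatrix} y & -a\\ 0 & x\end{pmatrix}$, viewed as $A$-linear maps $A^2\to A^2$ acting on column vectors, and set $G_a=\operatorname{Coker}\gamma_a$, $H_a=\operatorname{Coker}\eta_a$. A finitely generated $A$-module $G$ is totally reflexive if $\operatorname{Ext}^i_A(G,A)=0$ and $\operatorname{Ext}^i_A(\operatorname{Hom}_A(G,A),A)=0$ for all $i>0$, and the biduality map $G\to\operatorname{Hom}_A(\operatorname{Hom}_A(G,A),A)$ is an isomorphism. *)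

theory Defs
  imports "HOL-Algebra.Algebra"
begin

text \<open>Noetherian: the library locale noetherian_ring (HOL-Algebra.Ring_Divisibility).\<close>

definition local_ring :: "('a, 'b) ring_scheme \<Rightarrow> bool" where
  "local_ring R \<longleftrightarrow> (\<exists>!m. maximalideal m R)"

definition ann :: "('a, 'b) ring_scheme \<Rightarrow> 'a \<Rightarrow> 'a set" where
  "ann R x = {z \<in> carrier R. x \<otimes>\<^bsub>R\<^esub> z = \<zero>\<^bsub>R\<^esub>}"

definition exact_zd_pair :: "('a, 'b) ring_scheme \<Rightarrow> 'a \<Rightarrow> 'a \<Rightarrow> bool" where
  "exact_zd_pair R x y \<longleftrightarrow>
     x \<in> carrier R \<and> y \<in> carrier R \<and> x \<notin> Units R \<and> y \<notin> Units R \<and>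
     ann R x = PIdl\<^bsub>R\<^esub> y \<and> ann R y = PIdl\<^bsub>R\<^esub> x"

definition ring_mod :: "('a, 'b) ring_scheme \<Rightarrow> ('a, 'a) module" where
  "ring_mod R = \<lparr>partial_object.carrier = carrier R, monoid.mult = monoid.mult R, monoid.one = monoid.one R,
                 ring.zero = ring.zero R, ring.add = ring.add R, module.smult = monoid.mult R\<rparr>"

definition linear_map ::
  "('a, 'b) ring_scheme \<Rightarrow> ('a, 'm, 'c) module_scheme \<Rightarrow> ('a, 'n, 'd) module_scheme \<Rightarrow> ('m \<Rightarrow> 'n) \<Rightarrow> bool" where
  "linear_map R M N f \<longleftrightarrow>
     f \<in> carrier M \<rightarrow> carrier N \<and>
     (\<forall>u\<in>carrier M. \<forall>v\<in>carrier M. f (u \<oplus>\<^bsub>M\<^esub> v) = f u \<oplus>\<^bsub>N\<^esub> f v) \<and>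
     (\<forall>r\<in>carrier R. \<forall>v\<in>carrier M. f (r \<odot>\<^bsub>M\<^esub> v) = r \<odot>\<^bsub>N\<^esub> f v)"

definition mod_iso ::
  "('a, 'b) ring_scheme \<Rightarrow> ('a, 'm, 'c) module_scheme \<Rightarrow> ('a, 'n, 'd) module_scheme \<Rightarrow> ('m \<Rightarrow> 'n) \<Rightarrow> bool" where
  "mod_iso R M N f \<longleftrightarrow> linear_map R M N f \<and> bij_betw f (carrier M) (carrier N)"

definition mod_isomorphic ::
  "('a, 'b) ring_scheme \<Rightarrow> ('a, 'm, 'c) module_scheme \<Rightarrow> ('a, 'n, 'd) module_scheme \<Rightarrow> bool" where
  "mod_isomorphic R M N \<longleftrightarrow> (\<exists>f. mod_iso R M N f)"

text \<open>Hom_A(M,N) with pointwise operations; elements are linear maps, extensional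
  outside the carrier of M.  (The ring fields mult/one are irrelevant for modules.)\<close>
definition Hom_mod ::
  "('a, 'b) ring_scheme \<Rightarrow> ('a, 'm, 'c) module_scheme \<Rightarrow> ('a, 'n, 'd) module_scheme \<Rightarrow> ('a, 'm \<Rightarrow> 'n) module" where
  "Hom_mod R M N =
     \<lparr>partial_object.carrier = {f. linear_map R M N f \<and> f \<in> extensional (carrier M)},
      monoid.mult = (\<lambda>_ _. undefined), monoid.one = undefined,
      ring.zero = (\<lambda>u\<in>carrier M. \<zero>\<^bsub>N\<^esub>),
      ring.add = (\<lambda>f g. \<lambda>u\<in>carrier M. f u \<oplus>\<^bsub>N\<^esub> g u),
      module.smult = (\<lambda>r f. \<lambda>u\<in>carrier M. r \<odot>\<^bsub>N\<^esub> f u)\<rparr>"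

definition Dual :: "('a, 'b) ring_scheme \<Rightarrow> ('a, 'm, 'c) module_scheme \<Rightarrow> ('a, 'm \<Rightarrow> 'a) module" where
  "Dual R M = Hom_mod R M (ring_mod R)"

definition bidual_map :: "('a, 'b) ring_scheme \<Rightarrow> ('a, 'm, 'c) module_scheme \<Rightarrow> 'm \<Rightarrow> (('m \<Rightarrow> 'a) \<Rightarrow> 'a)" where
  "bidual_map R M = (\<lambda>u\<in>carrier M. \<lambda>f\<in>carrier (Dual R M). f u)"

definition fin_gen :: "('a, 'b) ring_scheme \<Rightarrow> ('a, 'm, 'c) module_scheme \<Rightarrow> bool" where
  "fin_gen R M \<longleftrightarrow> (\<exists>S. finite S \<and> S \<subseteq> carrier M \<and>
     (\<forall>u\<in>carrier M. \<exists>c. c \<in> S \<rightarrow> carrier R \<and> u = finsum M (\<lambda>s. c s \<odot>\<^bsub>M\<^esub> s) S))"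

text \<open>A^n: functions nat \<Rightarrow> A supported on {..<n}.\<close>
definition vecs :: "('a, 'b) ring_scheme \<Rightarrow> nat \<Rightarrow> (nat \<Rightarrow> 'a) set" where
  "vecs R n = {v. (\<forall>i<n. v i \<in> carrier R) \<and> (\<forall>i\<ge>n. v i = \<zero>\<^bsub>R\<^esub>)}"

definition vadd :: "('a, 'b) ring_scheme \<Rightarrow> (nat \<Rightarrow> 'a) \<Rightarrow> (nat \<Rightarrow> 'a) \<Rightarrow> (nat \<Rightarrow> 'a)" where
  "vadd R v w = (\<lambda>i. v i \<oplus>\<^bsub>R\<^esub> w i)"

definition vsmult :: "('a, 'b) ring_scheme \<Rightarrow> 'a \<Rightarrow> (nat \<Rightarrow> 'a) \<Rightarrow> (nat \<Rightarrow> 'a)" where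
  "vsmult R r v = (\<lambda>i. r \<otimes>\<^bsub>R\<^esub> v i)"

definition vzero :: "('a, 'b) ring_scheme \<Rightarrow> nat \<Rightarrow> 'a" where
  "vzero R = (\<lambda>i. \<zero>\<^bsub>R\<^esub>)"

definition free_mod :: "('a, 'b) ring_scheme \<Rightarrow> nat \<Rightarrow> ('a, nat \<Rightarrow> 'a) module" where
  "free_mod R n = \<lparr>partial_object.carrier = vecs R n, monoid.mult = (\<lambda>_ _. undefined), monoid.one = undefined,
                   ring.zero = vzero R, ring.add = vadd R, module.smult = vsmult R\<rparr>"

text \<open>An m \<times> n matrix D (entries D i j, i<m, j<n) acting on column vectors A^n \<rightarrow> A^m.\<close>
definition mat_app :: "('a, 'b) ring_scheme \<Rightarrow> nat \<Rightarrow> nat \<Rightarrow> (nat \<Rightarrow> nat \<Rightarrow> 'a) \<Rightarrow> (nat \<Rightarrow> 'a) \<Rightarrow> (nat \<Rightarrow> 'a)" where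
  "mat_app R m n D v = (\<lambda>i. if i < m then finsum R (\<lambda>j. D i j \<otimes>\<^bsub>R\<^esub> v j) {..<n} else \<zero>\<^bsub>R\<^esub>)"

definition mat_carrier :: "('a, 'b) ring_scheme \<Rightarrow> nat \<Rightarrow> nat \<Rightarrow> (nat \<Rightarrow> nat \<Rightarrow> 'a) \<Rightarrow> bool" where
  "mat_carrier R m n D \<longleftrightarrow> (\<forall>i<m. \<forall>j<n. D i j \<in> carrier R)"

definition mat_transpose :: "(nat \<Rightarrow> nat \<Rightarrow> 'a) \<Rightarrow> (nat \<Rightarrow> nat \<Rightarrow> 'a)" where
  "mat_transpose D = (\<lambda>i j. D j i)"

text \<open>Cokernel of an m \<times> n matrix D: the quotient A^m / D(A^n), elements are cosets.\<close>
definition mat_image :: "('a, 'b) ring_scheme \<Rightarrow> nat \<Rightarrow> nat \<Rightarrow> (nat \<Rightarrow> nat \<Rightarrow> 'a) \<Rightarrow> (nat \<Rightarrow> 'a) set" where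
  "mat_image R m n D = mat_app R m n D ` vecs R n"

definition coker :: "('a, 'b) ring_scheme \<Rightarrow> nat \<Rightarrow> nat \<Rightarrow> (nat \<Rightarrow> nat \<Rightarrow> 'a) \<Rightarrow> ('a, (nat \<Rightarrow> 'a) set) module" where
  "coker R m n D =
     \<lparr>partial_object.carrier = {{vadd R v u | u. u \<in> mat_image R m n D} | v. v \<in> vecs R m},
      monoid.mult = (\<lambda>_ _. undefined), monoid.one = undefined,
      ring.zero = mat_image R m n D,
      ring.add = (\<lambda>P Q. {vadd R u v | u v. u \<in> P \<and> v \<in> Q}),
      module.smult = (\<lambda>r P. {vadd R (vsmult R r u) w | u w. u \<in> P \<and> w \<in> mat_image R m n D})\<rparr>"

text \<open>A resolution of M by finitely generated free modules
   ... \<rightarrow> A^(n 2) --d 2--> A^(n 1) --d 1--> A^(n 0) --eps--> M \<rightarrow> 0,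
  where d (Suc k) is an (n k) \<times> (n (Suc k)) matrix.\<close>
definition free_resolution ::
  "('a, 'b) ring_scheme \<Rightarrow> ('a, 'm, 'c) module_scheme \<Rightarrow> (nat \<Rightarrow> nat) \<Rightarrow> (nat \<Rightarrow> nat \<Rightarrow> nat \<Rightarrow> 'a) \<Rightarrow> ((nat \<Rightarrow> 'a) \<Rightarrow> 'm) \<Rightarrow> bool" where
  "free_resolution R M n d eps \<longleftrightarrow>
     (\<forall>k. mat_carrier R (n k) (n (Suc k)) (d (Suc k))) \<and>
     linear_map R (free_mod R (n 0)) M eps \<and>
     eps ` vecs R (n 0) = carrier M \<and>
     {v \<in> vecs R (n 0). eps v = \<zero>\<^bsub>M\<^esub>} = mat_image R (n 0) (n 1) (d 1) \<and>
     (\<forall>k. {v \<in> vecs R (n (Suc k)). mat_app R (n k) (n (Suc k)) (d (Suc k)) v = vzero R}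
            = mat_image R (n (Suc k)) (n (Suc (Suc k))) (d (Suc (Suc k))))"

text \<open>Ext^i_A(M,A) = 0 for all i > 0: computed as the cohomology of Hom_A(F,A) for a
  finite free resolution F of M, using Hom_A(A^n,A) = A^n, under which Hom(d,A) is the
  transpose of d.  (The cohomology is independent of the chosen resolution.)\<close>
definition ext_vanishes :: "('a, 'b) ring_scheme \<Rightarrow> ('a, 'm, 'c) module_scheme \<Rightarrow> bool" where
  "ext_vanishes R M \<longleftrightarrow>
     (\<exists>n d eps. free_resolution R M n d eps \<and>
        (\<forall>k. {w \<in> vecs R (n (Suc k)).
                mat_app R (n (Suc (Suc k))) (n (Suc k)) (mat_transpose (d (Suc (Suc k)))) w = vzero R}
             = mat_image R (n (Suc k)) (n k) (mat_transpose (d (Suc k)))))"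

definition totally_reflexive :: "('a, 'b) ring_scheme \<Rightarrow> ('a, 'm, 'c) module_scheme \<Rightarrow> bool" where
  "totally_reflexive R M \<longleftrightarrow>
     module R M \<and> fin_gen R M \<and>
     ext_vanishes R M \<and> ext_vanishes R (Dual R M) \<and>
     mod_iso R M (Dual R (Dual R M)) (bidual_map R M)"

definition gamma_mat :: "('a, 'b) ring_scheme \<Rightarrow> 'a \<Rightarrow> 'a \<Rightarrow> 'a \<Rightarrow> nat \<Rightarrow> nat \<Rightarrow> 'a" where
  "gamma_mat R x y a = (\<lambda>i j. if i = 0 \<and> j = 0 then x else if i = 0 \<and> j = 1 then a
                              else if i = 1 \<and> j = 1 then y else \<zero>\<^bsub>R\<^esub>)"

definition eta_mat :: "('a, 'b) ring_scheme \<Rightarrow> 'a \<Rightarrow> 'a \<Rightarrow> 'a \<Rightarrow> nat \<Rightarrow> nat \<Rightarrow> 'a" where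
  "eta_mat R x y a = (\<lambda>i j. if i = 0 \<and> j = 0 then y else if i = 0 \<and> j = 1 then \<ominus>\<^bsub>R\<^esub> a
                            else if i = 1 \<and> j = 1 then x else \<zero>\<^bsub>R\<^esub>)"

definition G_mod :: "('a, 'b) ring_scheme \<Rightarrow> 'a \<Rightarrow> 'a \<Rightarrow> 'a \<Rightarrow> ('a, (nat \<Rightarrow> 'a) set) module" where
  "G_mod R x y a = coker R 2 2 (gamma_mat R x y a)"

definition H_mod :: "('a, 'b) ring_scheme \<Rightarrow> 'a \<Rightarrow> 'a \<Rightarrow> 'a \<Rightarrow> ('a, (nat \<Rightarrow> 'a) set) module" where
  "H_mod R x y a = coker R 2 2 (eta_mat R x y a)"

end

theory Submission imports Defs begin

definition vec2 :: "('a, 'b) ring_scheme \<Rightarrow> 'a \<Rightarrow> 'a \<Rightarrow> nat \<Rightarrow> 'a" where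
  "vec2 R p q = (\<lambda>i. if i = 0 then p else if i = 1 then q else \<zero>\<^bsub>R\<^esub>)"

definition vneg :: "('a, 'b) ring_scheme \<Rightarrow> (nat \<Rightarrow> 'a) \<Rightarrow> (nat \<Rightarrow> 'a)" where
  "vneg R v = vsmult R (\<ominus>\<^bsub>R\<^esub> \<one>\<^bsub>R\<^esub>) v"

context cring begin

lemma vec2_0 [simp]: "vec2 R p q 0 = p" and vec2_1 [simp]: "vec2 R p q (Suc 0) = q"
  by (auto simp: vec2_def)

lemma vecs_vec2: "v \<in> vecs R 2 \<Longrightarrow> v = vec2 R (v 0) (v 1)"
  unfolding vecs_def vec2_def by (rule ext) auto

lemma vecs_carr: "v \<in> vecs R 2 \<Longrightarrow> v 0 \<in> carrier R"  "v \<in> vecs R 2 \<Longrightarrow> v 1 \<in> carrier R"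
  unfolding vecs_def by auto

lemma vec2_vecs [simp]: "vec2 R p q \<in> vecs R 2 \<longleftrightarrow> p \<in> carrier R \<and> q \<in> carrier R"
  unfolding vecs_def vec2_def by (auto dest: spec[of _ 1])

lemma vec2_eq [simp]: "vec2 R a b = vec2 R c d \<longleftrightarrow> a = c \<and> b = d"
proof
  assume h: "vec2 R a b = vec2 R c d"
  have "vec2 R a b 0 = vec2 R c d 0" "vec2 R a b (Suc 0) = vec2 R c d (Suc 0)" using h by simp_all
  then show "a = c \<and> b = d" by simp
qed simp

lemma vadd_vec2 [simp]: "vadd R (vec2 R a b) (vec2 R c d) = vec2 R (a \<oplus> c) (b \<oplus> d)"
  unfolding vadd_def vec2_def by (rule ext) auto

lemma vsmult_vec2 [simp]: "r \<in> carrier R \<Longrightarrow> vsmult R r (vec2 R a b) = vec2 R (r \<otimes> a) (r \<otimes> b)"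
  unfolding vsmult_def vec2_def by (rule ext) auto

lemma vzero_vec2: "vzero R = vec2 R \<zero> \<zero>"
  unfolding vzero_def vec2_def by (rule ext) auto

lemma vecs2_cases: assumes "v \<in> vecs R 2" obtains p q where "p \<in> carrier R" "q \<in> carrier R" "v = vec2 R p q"
  using assms vecs_vec2 vecs_carr by blast

lemma mat_app2 [simp]:
  assumes "mat_carrier R 2 2 D" "p \<in> carrier R" "q \<in> carrier R"
  shows "mat_app R 2 2 D (vec2 R p q) = vec2 R (D 0 0 \<otimes> p \<oplus> D 0 1 \<otimes> q) (D 1 0 \<otimes> p \<oplus> D 1 1 \<otimes> q)"
proof -
  have c: "D 0 0 \<in> carrier R" "D 0 1 \<in> carrier R" "D 1 0 \<in> carrier R" "D 1 1 \<in> carrier R"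
    using assms(1) unfolding mat_carrier_def by auto
  have s: "finsum R f {..<2} = f 0 \<oplus> f 1" if "f \<in> {..<2} \<rightarrow> carrier R" for f :: "nat \<Rightarrow> 'a"
  proof -
    have "{..<2::nat} = insert 0 {1}" by auto
    then show ?thesis using that by (simp add: finsum_insert finsum_singleton)
  qed
  have pi: "(\<lambda>j. D i j \<otimes> vec2 R p q j) \<in> {..<2} \<rightarrow> carrier R" if "i < 2" for i
  proof -
    have "i = 0 \<or> i = 1" using that by auto
    then show ?thesis using c assms by (auto simp: vec2_def numeral_2_eq_2 less_Suc_eq)
  qed
  show ?thesis unfolding mat_app_def
  proof (rule ext)
    fix i :: nat
    show "(if i < 2 then finsum R (\<lambda>j. D i j \<otimes> vec2 R p q j) {..<2} else \<zero>) =
      vec2 R (D 0 0 \<otimes> p \<oplus> D 0 1 \<otimes> q) (D 1 0 \<otimes> p \<oplus> D 1 1 \<otimes> q) i"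
    proof (cases "i < 2")
      case True
      then have "i = 0 \<or> i = 1" by auto
      then show ?thesis
      proof
        assume "i = 0" then show ?thesis using s[OF pi[OF True]] by simp
      next
        assume "i = 1" then show ?thesis using s[OF pi[OF True]] by simp
      qed
    next
      case False
      then show ?thesis by (simp add: vec2_def)
    qed
  qed
qed

lemma vneg_vec2 [simp]: "vneg R (vec2 R a b) = vec2 R (\<ominus> \<one> \<otimes> a) (\<ominus> \<one> \<otimes> b)"
  unfolding vneg_def by simp

lemma vzero_vecs [simp]: "vzero R \<in> vecs R 2" by (simp add: vzero_vec2)

lemma vadd_vecs [simp]: "v \<in> vecs R 2 \<Longrightarrow> w \<in> vecs R 2 \<Longrightarrow> vadd R v w \<in> vecs R 2"
  by (elim vecs2_cases) simp

lemma vsmult_vecs [simp]: "r \<in> carrier R \<Longrightarrow> v \<in> vecs R 2 \<Longrightarrow> vsmult R r v \<in> vecs R 2"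
  by (elim vecs2_cases) simp

lemma vneg_vecs [simp]: "v \<in> vecs R 2 \<Longrightarrow> vneg R v \<in> vecs R 2"
  by (elim vecs2_cases) simp

lemma vadd_assoc: "u \<in> vecs R 2 \<Longrightarrow> v \<in> vecs R 2 \<Longrightarrow> w \<in> vecs R 2 \<Longrightarrow>
    vadd R (vadd R u v) w = vadd R u (vadd R v w)"
  by (elim vecs2_cases) (simp add: a_assoc)

lemma vadd_comm: "v \<in> vecs R 2 \<Longrightarrow> w \<in> vecs R 2 \<Longrightarrow> vadd R v w = vadd R w v"
  by (elim vecs2_cases) (simp add: a_comm)

lemma vadd_zero_l [simp]: "v \<in> vecs R 2 \<Longrightarrow> vadd R (vzero R) v = v"
  by (elim vecs2_cases) (simp add: vzero_vec2)

lemma vadd_zero_r [simp]: "v \<in> vecs R 2 \<Longrightarrow> vadd R v (vzero R) = v"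
  by (elim vecs2_cases) (simp add: vzero_vec2)

lemma vsmult_vadd: "r \<in> carrier R \<Longrightarrow> v \<in> vecs R 2 \<Longrightarrow> w \<in> vecs R 2 \<Longrightarrow>
    vsmult R r (vadd R v w) = vadd R (vsmult R r v) (vsmult R r w)"
  by (elim vecs2_cases) (simp add: r_distr)

lemma vsmult_add: "r \<in> carrier R \<Longrightarrow> s \<in> carrier R \<Longrightarrow> v \<in> vecs R 2 \<Longrightarrow>
    vsmult R (r \<oplus> s) v = vadd R (vsmult R r v) (vsmult R s v)"
  by (elim vecs2_cases) (simp add: l_distr)

lemma vsmult_mult: "r \<in> carrier R \<Longrightarrow> s \<in> carrier R \<Longrightarrow> v \<in> vecs R 2 \<Longrightarrow>
    vsmult R (r \<otimes> s) v = vsmult R r (vsmult R s v)"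
  by (elim vecs2_cases) (simp add: m_assoc)

lemma vsmult_one [simp]: "v \<in> vecs R 2 \<Longrightarrow> vsmult R \<one> v = v"
  by (elim vecs2_cases) simp

lemma vadd_neg_r: assumes "v \<in> vecs R 2" shows "vadd R v (vneg R v) = vzero R"
proof -
  obtain p q where pq: "p \<in> carrier R" "q \<in> carrier R" and v: "v = vec2 R p q" using assms by (rule vecs2_cases)
  have "p \<oplus> \<ominus> \<one> \<otimes> p = \<zero>" using pq by algebra
  moreover have "q \<oplus> \<ominus> \<one> \<otimes> q = \<zero>" using pq by algebra
  ultimately show ?thesis unfolding v using pq by (simp add: vzero_vec2)
qed

lemma vadd_neg_l: assumes "v \<in> vecs R 2" shows "vadd R (vneg R v) v = vzero R"
  using vadd_neg_r[OF assms] vadd_comm[OF vneg_vecs[OF assms] assms] by simp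

lemma vsub_cancel: assumes "v \<in> vecs R 2" "u \<in> vecs R 2" shows "vadd R (vadd R v u) (vneg R v) = u"
proof -
  obtain p q where pq: "p \<in> carrier R" "q \<in> carrier R" and v: "v = vec2 R p q" using assms(1) by (rule vecs2_cases)
  obtain p' q' where pq': "p' \<in> carrier R" "q' \<in> carrier R" and u: "u = vec2 R p' q'" using assms(2) by (rule vecs2_cases)
  have "p \<oplus> p' \<oplus> \<ominus> \<one> \<otimes> p = p'" using pq pq' by algebra
  moreover have "q \<oplus> q' \<oplus> \<ominus> \<one> \<otimes> q = q'" using pq pq' by algebra
  ultimately show ?thesis unfolding v u using pq pq' by simp
qed

lemma vsub_cancel2: assumes "v \<in> vecs R 2" "w \<in> vecs R 2" shows "vadd R w (vadd R v (vneg R w)) = v"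
proof -
  obtain p q where pq: "p \<in> carrier R" "q \<in> carrier R" and v: "v = vec2 R p q" using assms(1) by (rule vecs2_cases)
  obtain p' q' where pq': "p' \<in> carrier R" "q' \<in> carrier R" and u: "w = vec2 R p' q'" using assms(2) by (rule vecs2_cases)
  have "p' \<oplus> (p \<oplus> \<ominus> \<one> \<otimes> p') = p" using pq pq' by algebra
  moreover have "q' \<oplus> (q \<oplus> \<ominus> \<one> \<otimes> q') = q" using pq pq' by algebra
  ultimately show ?thesis unfolding v u using pq pq' by simp
qed

lemma vneg_sub: assumes "v \<in> vecs R 2" "w \<in> vecs R 2"
  shows "vneg R (vadd R v (vneg R w)) = vadd R w (vneg R v)"
proof -
  obtain p q where pq: "p \<in> carrier R" "q \<in> carrier R" and v: "v = vec2 R p q" using assms(1) by (rule vecs2_cases)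
  obtain p' q' where pq': "p' \<in> carrier R" "q' \<in> carrier R" and u: "w = vec2 R p' q'" using assms(2) by (rule vecs2_cases)
  have "\<ominus> \<one> \<otimes> (p \<oplus> \<ominus> \<one> \<otimes> p') = p' \<oplus> \<ominus> \<one> \<otimes> p" using pq pq' by algebra
  moreover have "\<ominus> \<one> \<otimes> (q \<oplus> \<ominus> \<one> \<otimes> q') = q' \<oplus> \<ominus> \<one> \<otimes> q" using pq pq' by algebra
  ultimately show ?thesis unfolding v u using pq pq' by simp
qed


lemma mat_carrier2: "mat_carrier R 2 2 D \<Longrightarrow> D 0 0 \<in> carrier R \<and> D 0 1 \<in> carrier R \<and> D 1 0 \<in> carrier R \<and> D 1 1 \<in> carrier R"
  unfolding mat_carrier_def by auto

lemma mat_app_vecs [simp]: "mat_carrier R 2 2 D \<Longrightarrow> v \<in> vecs R 2 \<Longrightarrow> mat_app R 2 2 D v \<in> vecs R 2"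
  by (elim vecs2_cases) (use mat_carrier2 in simp)

lemma mat_app_vadd: assumes D: "mat_carrier R 2 2 D" and "v \<in> vecs R 2" "w \<in> vecs R 2"
  shows "mat_app R 2 2 D (vadd R v w) = vadd R (mat_app R 2 2 D v) (mat_app R 2 2 D w)"
proof -
  obtain p q where pq: "p \<in> carrier R" "q \<in> carrier R" and v: "v = vec2 R p q" using assms(2) by (rule vecs2_cases)
  obtain p' q' where pq': "p' \<in> carrier R" "q' \<in> carrier R" and u: "w = vec2 R p' q'" using assms(3) by (rule vecs2_cases)
  note c = mat_carrier2[OF D]
  have "D 0 0 \<otimes> (p \<oplus> p') \<oplus> D 0 1 \<otimes> (q \<oplus> q') = D 0 0 \<otimes> p \<oplus> D 0 1 \<otimes> q \<oplus> (D 0 0 \<otimes> p' \<oplus> D 0 1 \<otimes> q')"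
    using pq pq' c by algebra
  moreover have "D 1 0 \<otimes> (p \<oplus> p') \<oplus> D 1 1 \<otimes> (q \<oplus> q') = D 1 0 \<otimes> p \<oplus> D 1 1 \<otimes> q \<oplus> (D 1 0 \<otimes> p' \<oplus> D 1 1 \<otimes> q')"
    using pq pq' c by algebra
  ultimately show ?thesis unfolding v u using pq pq' D by simp
qed

lemma mat_app_vsmult: assumes D: "mat_carrier R 2 2 D" and r: "r \<in> carrier R" and "v \<in> vecs R 2"
  shows "mat_app R 2 2 D (vsmult R r v) = vsmult R r (mat_app R 2 2 D v)"
proof -
  obtain p q where pq: "p \<in> carrier R" "q \<in> carrier R" and v: "v = vec2 R p q" using assms(3) by (rule vecs2_cases)
  note c = mat_carrier2[OF D]
  have "D 0 0 \<otimes> (r \<otimes> p) \<oplus> D 0 1 \<otimes> (r \<otimes> q) = r \<otimes> (D 0 0 \<otimes> p \<oplus> D 0 1 \<otimes> q)"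
    using pq r c by algebra
  moreover have "D 1 0 \<otimes> (r \<otimes> p) \<oplus> D 1 1 \<otimes> (r \<otimes> q) = r \<otimes> (D 1 0 \<otimes> p \<oplus> D 1 1 \<otimes> q)"
    using pq r c by algebra
  ultimately show ?thesis unfolding v using pq r D by simp
qed

lemma mat_image_iff: assumes "mat_carrier R 2 2 D"
  shows "u \<in> mat_image R 2 2 D \<longleftrightarrow> (\<exists>s\<in>carrier R. \<exists>t\<in>carrier R. u = vec2 R (D 0 0 \<otimes> s \<oplus> D 0 1 \<otimes> t) (D 1 0 \<otimes> s \<oplus> D 1 1 \<otimes> t))"
proof
  assume "u \<in> mat_image R 2 2 D"
  then obtain v where v: "v \<in> vecs R 2" "u = mat_app R 2 2 D v" unfolding mat_image_def by auto
  then obtain s t where "s \<in> carrier R" "t \<in> carrier R" "v = vec2 R s t" by (elim vecs2_cases)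
  then show "\<exists>s\<in>carrier R. \<exists>t\<in>carrier R. u = vec2 R (D 0 0 \<otimes> s \<oplus> D 0 1 \<otimes> t) (D 1 0 \<otimes> s \<oplus> D 1 1 \<otimes> t)"
    using v assms by auto
next
  assume "\<exists>s\<in>carrier R. \<exists>t\<in>carrier R. u = vec2 R (D 0 0 \<otimes> s \<oplus> D 0 1 \<otimes> t) (D 1 0 \<otimes> s \<oplus> D 1 1 \<otimes> t)"
  then obtain s t where "s \<in> carrier R" "t \<in> carrier R" "u = vec2 R (D 0 0 \<otimes> s \<oplus> D 0 1 \<otimes> t) (D 1 0 \<otimes> s \<oplus> D 1 1 \<otimes> t)" by auto
  then show "u \<in> mat_image R 2 2 D" unfolding mat_image_def using assms
    by (auto intro!: image_eqI[where x="vec2 R s t"])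
qed

lemma img_vecs: "mat_carrier R 2 2 D \<Longrightarrow> u \<in> mat_image R 2 2 D \<Longrightarrow> u \<in> vecs R 2"
  unfolding mat_image_def by auto

lemma vsmult_zero: "v \<in> vecs R 2 \<Longrightarrow> vsmult R \<zero> v = vzero R"
  by (elim vecs2_cases) (simp add: vzero_vec2)

lemma mat_app_zero: assumes D: "mat_carrier R 2 2 D" shows "mat_app R 2 2 D (vzero R) = vzero R"
proof -
  have "mat_app R 2 2 D (vzero R) = mat_app R 2 2 D (vsmult R \<zero> (vzero R))" by (simp add: vsmult_zero)
  also have "\<dots> = vzero R" using mat_app_vsmult[OF D zero_closed vzero_vecs] vsmult_zero D by simp
  finally show ?thesis .
qed

lemma img_zero: assumes D: "mat_carrier R 2 2 D" shows "vzero R \<in> mat_image R 2 2 D"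
  using mat_app_zero[OF D] unfolding mat_image_def by (metis image_eqI vzero_vecs)

lemma img_add: assumes D: "mat_carrier R 2 2 D" and "u \<in> mat_image R 2 2 D" "u' \<in> mat_image R 2 2 D"
  shows "vadd R u u' \<in> mat_image R 2 2 D"
proof -
  obtain x x' where x: "x \<in> vecs R 2" "x' \<in> vecs R 2" "u = mat_app R 2 2 D x" "u' = mat_app R 2 2 D x'"
    using assms(2,3) unfolding mat_image_def by auto
  then have "vadd R u u' = mat_app R 2 2 D (vadd R x x')" using mat_app_vadd[OF D] by simp
  then show ?thesis unfolding mat_image_def using x by auto
qed

lemma img_smult: assumes D: "mat_carrier R 2 2 D" and r: "r \<in> carrier R" and "u \<in> mat_image R 2 2 D"
  shows "vsmult R r u \<in> mat_image R 2 2 D"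
proof -
  obtain x where x: "x \<in> vecs R 2" "u = mat_app R 2 2 D x"
    using assms(3) unfolding mat_image_def by auto
  then have "vsmult R r u = mat_app R 2 2 D (vsmult R r x)" using mat_app_vsmult[OF D r] by simp
  then show ?thesis unfolding mat_image_def using x r by auto
qed

lemma img_neg: "mat_carrier R 2 2 D \<Longrightarrow> u \<in> mat_image R 2 2 D \<Longrightarrow> vneg R u \<in> mat_image R 2 2 D"
  unfolding vneg_def by (rule img_smult) auto

end

definition cst :: "('a, 'b) ring_scheme \<Rightarrow> (nat \<Rightarrow> nat \<Rightarrow> 'a) \<Rightarrow> (nat \<Rightarrow> 'a) \<Rightarrow> (nat \<Rightarrow> 'a) set" where
  "cst R D v = {vadd R v u | u. u \<in> mat_image R 2 2 D}"

context cring begin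

lemma cst_mem: "mat_carrier R 2 2 D \<Longrightarrow> v \<in> vecs R 2 \<Longrightarrow> v \<in> cst R D v"
  unfolding cst_def using img_zero by force

lemma cst_sub: assumes D: "mat_carrier R 2 2 D" and v: "v \<in> vecs R 2" and w: "w \<in> vecs R 2"
  and d: "vadd R v (vneg R w) \<in> mat_image R 2 2 D"
  shows "cst R D v \<subseteq> cst R D w"
proof
  fix z assume "z \<in> cst R D v"
  then obtain u where u: "u \<in> mat_image R 2 2 D" "z = vadd R v u" unfolding cst_def by auto
  have uv: "u \<in> vecs R 2" "vadd R v (vneg R w) \<in> vecs R 2" using img_vecs[OF D] u d by auto
  have "z = vadd R (vadd R w (vadd R v (vneg R w))) u" using vsub_cancel2[OF v w] u by simp
  also have "\<dots> = vadd R w (vadd R (vadd R v (vneg R w)) u)" using vadd_assoc uv w by simp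
  finally show "z \<in> cst R D w" unfolding cst_def using img_add[OF D d u(1)] by auto
qed

lemma cst_eq_iff: assumes D: "mat_carrier R 2 2 D" and v: "v \<in> vecs R 2" and w: "w \<in> vecs R 2"
  shows "cst R D v = cst R D w \<longleftrightarrow> vadd R v (vneg R w) \<in> mat_image R 2 2 D"
proof
  assume "cst R D v = cst R D w"
  then have "v \<in> cst R D w" using cst_mem[OF D v] by simp
  then obtain u where u: "u \<in> mat_image R 2 2 D" "v = vadd R w u" unfolding cst_def by auto
  then show "vadd R v (vneg R w) \<in> mat_image R 2 2 D" using vsub_cancel[OF w img_vecs[OF D u(1)]] by simp
next
  assume d: "vadd R v (vneg R w) \<in> mat_image R 2 2 D"
  then have d': "vadd R w (vneg R v) \<in> mat_image R 2 2 D" using img_neg[OF D d] vneg_sub[OF v w] by simp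
  show "cst R D v = cst R D w" using cst_sub[OF D v w d] cst_sub[OF D w v d'] by auto
qed

lemma cst_zero: assumes D: "mat_carrier R 2 2 D" shows "cst R D (vzero R) = mat_image R 2 2 D"
  unfolding cst_def using img_vecs[OF D] by force

lemma cst_add: assumes D: "mat_carrier R 2 2 D" and v: "v \<in> vecs R 2" and w: "w \<in> vecs R 2"
  shows "{vadd R u u' | u u'. u \<in> cst R D v \<and> u' \<in> cst R D w} = cst R D (vadd R v w)"
proof (intro equalityI subsetI)
  fix z assume "z \<in> {vadd R u u' | u u'. u \<in> cst R D v \<and> u' \<in> cst R D w}"
  then obtain i j where ij: "i \<in> mat_image R 2 2 D" "j \<in> mat_image R 2 2 D" "z = vadd R (vadd R v i) (vadd R w j)"
    unfolding cst_def by auto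
  have iv: "i \<in> vecs R 2" "j \<in> vecs R 2" using ij img_vecs[OF D] by auto
  have "vadd R (vadd R v i) (vadd R w j) = vadd R v (vadd R i (vadd R w j))" using vadd_assoc iv v w by simp
  also have "vadd R i (vadd R w j) = vadd R w (vadd R i j)"
    using vadd_assoc[of i w j] vadd_assoc[of w i j] vadd_comm[of i w] iv w by simp
  finally have "z = vadd R (vadd R v w) (vadd R i j)" using ij vadd_assoc iv v w by simp
  then show "z \<in> cst R D (vadd R v w)" unfolding cst_def using img_add[OF D ij(1,2)] by auto
next
  fix z assume "z \<in> cst R D (vadd R v w)"
  then obtain i where i: "i \<in> mat_image R 2 2 D" "z = vadd R (vadd R v w) i" unfolding cst_def by auto
  have iv: "i \<in> vecs R 2" using i img_vecs[OF D] by auto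
  have "z = vadd R (vadd R v i) (vadd R w (vzero R))" using i vadd_assoc iv v w vadd_comm by simp
  moreover have "vadd R v i \<in> cst R D v" "vadd R w (vzero R) \<in> cst R D w"
    unfolding cst_def using i img_zero[OF D] by auto
  ultimately show "z \<in> {vadd R u u' | u u'. u \<in> cst R D v \<and> u' \<in> cst R D w}" by blast
qed

lemma cst_smult: assumes D: "mat_carrier R 2 2 D" and r: "r \<in> carrier R" and v: "v \<in> vecs R 2"
  shows "{vadd R (vsmult R r u) w | u w. u \<in> cst R D v \<and> w \<in> mat_image R 2 2 D} = cst R D (vsmult R r v)"
proof (intro equalityI subsetI)
  fix z assume "z \<in> {vadd R (vsmult R r u) w | u w. u \<in> cst R D v \<and> w \<in> mat_image R 2 2 D}"
  then obtain i j where ij: "i \<in> mat_image R 2 2 D" "j \<in> mat_image R 2 2 D" "z = vadd R (vsmult R r (vadd R v i)) j"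
    unfolding cst_def by auto
  have iv: "i \<in> vecs R 2" "j \<in> vecs R 2" using ij img_vecs[OF D] by auto
  have "z = vadd R (vsmult R r v) (vadd R (vsmult R r i) j)" using ij vsmult_vadd vadd_assoc iv v r by simp
  then show "z \<in> cst R D (vsmult R r v)" unfolding cst_def using img_add[OF D img_smult[OF D r ij(1)] ij(2)] by auto
next
  fix z assume "z \<in> cst R D (vsmult R r v)"
  then obtain i where i: "i \<in> mat_image R 2 2 D" "z = vadd R (vsmult R r v) i" unfolding cst_def by auto
  have "vadd R v (vzero R) \<in> cst R D v" unfolding cst_def using img_zero[OF D] by auto
  moreover have "z = vadd R (vsmult R r (vadd R v (vzero R))) i" using i v by simp
  ultimately show "z \<in> {vadd R (vsmult R r u) w | u w. u \<in> cst R D v \<and> w \<in> mat_image R 2 2 D}" using i by blast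
qed

lemma coker_carrier: "carrier (coker R 2 2 D) = cst R D ` vecs R 2"
  unfolding coker_def cst_def by auto

lemma coker_add: "mat_carrier R 2 2 D \<Longrightarrow> v \<in> vecs R 2 \<Longrightarrow> w \<in> vecs R 2 \<Longrightarrow>
    cst R D v \<oplus>\<^bsub>coker R 2 2 D\<^esub> cst R D w = cst R D (vadd R v w)"
  unfolding coker_def using cst_add by simp

lemma coker_smult: "mat_carrier R 2 2 D \<Longrightarrow> r \<in> carrier R \<Longrightarrow> v \<in> vecs R 2 \<Longrightarrow>
    r \<odot>\<^bsub>coker R 2 2 D\<^esub> cst R D v = cst R D (vsmult R r v)"
  unfolding coker_def using cst_smult by simp

lemma coker_zero: "mat_carrier R 2 2 D \<Longrightarrow> \<zero>\<^bsub>coker R 2 2 D\<^esub> = cst R D (vzero R)"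
  unfolding coker_def using cst_zero by simp

lemma coker_module: assumes D: "mat_carrier R 2 2 D" shows "module R (coker R 2 2 D)"
proof -
  let ?M = "coker R 2 2 D"
  have E: "P \<in> carrier ?M \<Longrightarrow> (\<And>v. v \<in> vecs R 2 \<Longrightarrow> P = cst R D v \<Longrightarrow> thesis) \<Longrightarrow> thesis" for P thesis
    unfolding coker_carrier by auto
  have C: "v \<in> vecs R 2 \<Longrightarrow> cst R D v \<in> carrier ?M" for v unfolding coker_carrier by auto
  note add = coker_add[OF D] and sm = coker_smult[OF D] and z = coker_zero[OF D]
  have ag: "abelian_group ?M"
  proof (rule abelian_groupI)
    show "P \<oplus>\<^bsub>?M\<^esub> Q \<in> carrier ?M" if "P \<in> carrier ?M" "Q \<in> carrier ?M" for P Q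
      using that by (elim E) (simp add: add C)
    show "\<zero>\<^bsub>?M\<^esub> \<in> carrier ?M" by (simp add: z C)
    show "P \<oplus>\<^bsub>?M\<^esub> Q \<oplus>\<^bsub>?M\<^esub> S = P \<oplus>\<^bsub>?M\<^esub> (Q \<oplus>\<^bsub>?M\<^esub> S)"
      if "P \<in> carrier ?M" "Q \<in> carrier ?M" "S \<in> carrier ?M" for P Q S
      using that by (elim E) (simp add: add vadd_assoc)
    show "P \<oplus>\<^bsub>?M\<^esub> Q = Q \<oplus>\<^bsub>?M\<^esub> P" if "P \<in> carrier ?M" "Q \<in> carrier ?M" for P Q
      using that by (elim E) (simp add: add vadd_comm)
    show "\<zero>\<^bsub>?M\<^esub> \<oplus>\<^bsub>?M\<^esub> P = P" if "P \<in> carrier ?M" for P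
      using that by (elim E) (simp add: add z)
    show "\<exists>Q\<in>carrier ?M. Q \<oplus>\<^bsub>?M\<^esub> P = \<zero>\<^bsub>?M\<^esub>" if "P \<in> carrier ?M" for P
      using that
    proof (elim E)
      fix v assume v: "v \<in> vecs R 2" "P = cst R D v"
      show ?thesis using v by (intro bexI[where x="cst R D (vneg R v)"]) (simp_all add: add z C vadd_neg_l)
    qed
  qed
  show ?thesis
  proof (rule moduleI)
    show "cring R" by (rule is_cring)
    show "abelian_group ?M" by (rule ag)
    show "a \<odot>\<^bsub>?M\<^esub> P \<in> carrier ?M" if "a \<in> carrier R" "P \<in> carrier ?M" for a P
      using that by (elim E) (simp add: sm C)
    show "(a \<oplus> b) \<odot>\<^bsub>?M\<^esub> P = a \<odot>\<^bsub>?M\<^esub> P \<oplus>\<^bsub>?M\<^esub> b \<odot>\<^bsub>?M\<^esub> P"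
      if "a \<in> carrier R" "b \<in> carrier R" "P \<in> carrier ?M" for a b P
      using that by (elim E) (simp add: sm add vsmult_add)
    show "a \<odot>\<^bsub>?M\<^esub> (P \<oplus>\<^bsub>?M\<^esub> Q) = a \<odot>\<^bsub>?M\<^esub> P \<oplus>\<^bsub>?M\<^esub> a \<odot>\<^bsub>?M\<^esub> Q"
      if "a \<in> carrier R" "P \<in> carrier ?M" "Q \<in> carrier ?M" for a P Q
      using that by (elim E) (simp add: sm add vsmult_vadd)
    show "(a \<otimes> b) \<odot>\<^bsub>?M\<^esub> P = a \<odot>\<^bsub>?M\<^esub> (b \<odot>\<^bsub>?M\<^esub> P)"
      if "a \<in> carrier R" "b \<in> carrier R" "P \<in> carrier ?M" for a b P
      using that by (elim E) (simp add: sm vsmult_mult)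
    show "\<one> \<odot>\<^bsub>?M\<^esub> P = P" if "P \<in> carrier ?M" for P
      using that by (elim E) (simp add: sm)
  qed
qed


lemma mat_carrier_T: "mat_carrier R 2 2 D \<Longrightarrow> mat_carrier R 2 2 (mat_transpose D)"
  unfolding mat_carrier_def mat_transpose_def by auto

lemma transpose_transpose [simp]: "mat_transpose (mat_transpose D) = D"
  unfolding mat_transpose_def by simp

lemma ann_iff: assumes "exact_zd_pair R x y" "z \<in> carrier R"
  shows "x \<otimes> z = \<zero> \<longleftrightarrow> (\<exists>s\<in>carrier R. z = s \<otimes> y)"
proof -
  have "z \<in> ann R x \<longleftrightarrow> z \<in> PIdl y" using assms(1) unfolding exact_zd_pair_def by simp
  then show ?thesis using assms(2) unfolding ann_def cgenideal_def by auto
qed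

lemma exact_sym: "exact_zd_pair R x y \<Longrightarrow> exact_zd_pair R y x"
  unfolding exact_zd_pair_def by auto

lemma exact_carr: "exact_zd_pair R x y \<Longrightarrow> x \<in> carrier R \<and> y \<in> carrier R"
  unfolding exact_zd_pair_def by auto

lemma exact_xy: assumes "exact_zd_pair R x y" shows "x \<otimes> y = \<zero>"
proof -
  have y: "y \<in> carrier R" "x \<in> carrier R" using exact_carr[OF assms] by auto
  have "y = \<one> \<otimes> y" using y by simp
  then show ?thesis using ann_iff[OF assms y(1)] by blast
qed

lemma gamma_carrier: "x \<in> carrier R \<Longrightarrow> y \<in> carrier R \<Longrightarrow> a \<in> carrier R \<Longrightarrow> mat_carrier R 2 2 (gamma_mat R x y a)"
  unfolding mat_carrier_def gamma_mat_def by auto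

lemma eta_gamma: "eta_mat R x y a = gamma_mat R y x (\<ominus> a)"
  unfolding eta_mat_def gamma_mat_def by simp

lemma gamma_eta: assumes "a \<in> carrier R" shows "gamma_mat R x y a = eta_mat R y x (\<ominus> a)"
proof -
  have h: "\<ominus> (\<ominus> a) = a" using assms by simp
  show ?thesis unfolding eta_mat_def gamma_mat_def h ..
qed

lemma gamma_app: "x \<in> carrier R \<Longrightarrow> y \<in> carrier R \<Longrightarrow> a \<in> carrier R \<Longrightarrow> p \<in> carrier R \<Longrightarrow> q \<in> carrier R \<Longrightarrow>
  mat_app R 2 2 (gamma_mat R x y a) (vec2 R p q) = vec2 R (x \<otimes> p \<oplus> a \<otimes> q) (y \<otimes> q)"
  using gamma_carrier[of x y a] by (simp add: gamma_mat_def)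

lemma gammaT_app: "x \<in> carrier R \<Longrightarrow> y \<in> carrier R \<Longrightarrow> a \<in> carrier R \<Longrightarrow> p \<in> carrier R \<Longrightarrow> q \<in> carrier R \<Longrightarrow>
  mat_app R 2 2 (mat_transpose (gamma_mat R x y a)) (vec2 R p q) = vec2 R (x \<otimes> p) (a \<otimes> p \<oplus> y \<otimes> q)"
  using mat_carrier_T[OF gamma_carrier[of x y a]] by (simp add: gamma_mat_def mat_transpose_def)

lemma gamma_img: "x \<in> carrier R \<Longrightarrow> y \<in> carrier R \<Longrightarrow> a \<in> carrier R \<Longrightarrow>
  u \<in> mat_image R 2 2 (gamma_mat R x y a) \<longleftrightarrow> (\<exists>s\<in>carrier R. \<exists>t\<in>carrier R. u = vec2 R (x \<otimes> s \<oplus> a \<otimes> t) (y \<otimes> t))"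
  using mat_image_iff[OF gamma_carrier[of x y a]] by (simp add: gamma_mat_def)

lemma gammaT_img: "x \<in> carrier R \<Longrightarrow> y \<in> carrier R \<Longrightarrow> a \<in> carrier R \<Longrightarrow>
  u \<in> mat_image R 2 2 (mat_transpose (gamma_mat R x y a)) \<longleftrightarrow> (\<exists>s\<in>carrier R. \<exists>t\<in>carrier R. u = vec2 R (x \<otimes> s) (a \<otimes> s \<oplus> y \<otimes> t))"
  using mat_image_iff[OF mat_carrier_T[OF gamma_carrier[of x y a]]] by (simp add: gamma_mat_def mat_transpose_def)

lemma exact_L1: assumes ex: "exact_zd_pair R x y" and a: "a \<in> carrier R"
  shows "{v \<in> vecs R 2. mat_app R 2 2 (gamma_mat R x y a) v = vzero R} = mat_image R 2 2 (gamma_mat R y x (\<ominus> a))"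
proof (intro equalityI subsetI)
  have xy: "x \<in> carrier R" "y \<in> carrier R" using exact_carr[OF ex] by auto
  fix v assume "v \<in> {v \<in> vecs R 2. mat_app R 2 2 (gamma_mat R x y a) v = vzero R}"
  then have v: "v \<in> vecs R 2" "mat_app R 2 2 (gamma_mat R x y a) v = vzero R" by auto
  obtain p q where pq: "p \<in> carrier R" "q \<in> carrier R" and vv: "v = vec2 R p q" using v(1) by (rule vecs2_cases)
  have e: "x \<otimes> p \<oplus> a \<otimes> q = \<zero>" "y \<otimes> q = \<zero>" using v(2) unfolding vv using gamma_app[OF xy a pq] by (simp_all add: vzero_vec2)
  obtain t where t: "t \<in> carrier R" "q = t \<otimes> x" using ann_iff[OF exact_sym[OF ex] pq(2)] e(2) by auto
  have "x \<otimes> (p \<oplus> a \<otimes> t) = x \<otimes> p \<oplus> a \<otimes> (t \<otimes> x)" using xy a pq t by algebra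
  also have "\<dots> = \<zero>" using e(1) t by simp
  finally obtain s where s: "s \<in> carrier R" "p \<oplus> a \<otimes> t = s \<otimes> y" using ann_iff[OF ex, of "p \<oplus> a \<otimes> t"] pq a t by auto
  have "p = (p \<oplus> a \<otimes> t) \<oplus> \<ominus> a \<otimes> t" using pq a t by algebra
  also have "\<dots> = y \<otimes> s \<oplus> \<ominus> a \<otimes> t" using s xy a t by (simp add: m_comm)
  finally have "p = y \<otimes> s \<oplus> \<ominus> a \<otimes> t" .
  moreover have "q = x \<otimes> t" using t xy by (simp add: m_comm)
  ultimately show "v \<in> mat_image R 2 2 (gamma_mat R y x (\<ominus> a))"
    unfolding gamma_img[OF xy(2,1) a_inv_closed[OF a]] vv using s t by auto
next
  have xy: "x \<in> carrier R" "y \<in> carrier R" using exact_carr[OF ex] by auto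
  fix v assume "v \<in> mat_image R 2 2 (gamma_mat R y x (\<ominus> a))"
  then obtain s t where st: "s \<in> carrier R" "t \<in> carrier R" and vv: "v = vec2 R (y \<otimes> s \<oplus> \<ominus> a \<otimes> t) (x \<otimes> t)"
    unfolding gamma_img[OF xy(2,1) a_inv_closed[OF a]] by auto
  have "x \<otimes> (y \<otimes> s \<oplus> \<ominus> a \<otimes> t) \<oplus> a \<otimes> (x \<otimes> t) = (x \<otimes> y) \<otimes> s" using xy a st by algebra
  also have "\<dots> = \<zero>" using exact_xy[OF ex] st by simp
  finally have 1: "x \<otimes> (y \<otimes> s \<oplus> \<ominus> a \<otimes> t) \<oplus> a \<otimes> (x \<otimes> t) = \<zero>" .
  have "y \<otimes> (x \<otimes> t) = (x \<otimes> y) \<otimes> t" using xy st by algebra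
  also have "\<dots> = \<zero>" using exact_xy[OF ex] st by simp
  finally have 2: "y \<otimes> (x \<otimes> t) = \<zero>" .
  show "v \<in> {v \<in> vecs R 2. mat_app R 2 2 (gamma_mat R x y a) v = vzero R}"
    unfolding vv using gamma_app[OF xy a, of "y \<otimes> s \<oplus> \<ominus> a \<otimes> t" "x \<otimes> t"] 1 2 xy a st by (simp add: vzero_vec2)
qed

lemma exact_L2: assumes ex: "exact_zd_pair R x y" and a: "a \<in> carrier R"
  shows "{v \<in> vecs R 2. mat_app R 2 2 (mat_transpose (gamma_mat R x y a)) v = vzero R} =
     mat_image R 2 2 (mat_transpose (gamma_mat R y x (\<ominus> a)))"
proof (intro equalityI subsetI)
  have xy: "x \<in> carrier R" "y \<in> carrier R" using exact_carr[OF ex] by auto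
  fix v assume "v \<in> {v \<in> vecs R 2. mat_app R 2 2 (mat_transpose (gamma_mat R x y a)) v = vzero R}"
  then have v: "v \<in> vecs R 2" "mat_app R 2 2 (mat_transpose (gamma_mat R x y a)) v = vzero R" by auto
  obtain p q where pq: "p \<in> carrier R" "q \<in> carrier R" and vv: "v = vec2 R p q" using v(1) by (rule vecs2_cases)
  have e: "x \<otimes> p = \<zero>" "a \<otimes> p \<oplus> y \<otimes> q = \<zero>" using v(2) unfolding vv using gammaT_app[OF xy a pq] by (simp_all add: vzero_vec2)
  obtain s where s: "s \<in> carrier R" "p = s \<otimes> y" using ann_iff[OF ex pq(1)] e(1) by auto
  have "y \<otimes> (a \<otimes> s \<oplus> q) = a \<otimes> (s \<otimes> y) \<oplus> y \<otimes> q" using xy a pq s by algebra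
  also have "\<dots> = \<zero>" using e(2) s by simp
  finally obtain t where t: "t \<in> carrier R" "a \<otimes> s \<oplus> q = t \<otimes> x" using ann_iff[OF exact_sym[OF ex], of "a \<otimes> s \<oplus> q"] pq a s by auto
  have "q = (a \<otimes> s \<oplus> q) \<oplus> \<ominus> a \<otimes> s" using pq a s by algebra
  also have "\<dots> = \<ominus> a \<otimes> s \<oplus> x \<otimes> t" using t xy a s by (simp add: m_comm a_comm)
  finally have "q = \<ominus> a \<otimes> s \<oplus> x \<otimes> t" .
  moreover have "p = y \<otimes> s" using s xy by (simp add: m_comm)
  ultimately show "v \<in> mat_image R 2 2 (mat_transpose (gamma_mat R y x (\<ominus> a)))"
    unfolding gammaT_img[OF xy(2,1) a_inv_closed[OF a]] vv using s t by auto
next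
  have xy: "x \<in> carrier R" "y \<in> carrier R" using exact_carr[OF ex] by auto
  fix v assume "v \<in> mat_image R 2 2 (mat_transpose (gamma_mat R y x (\<ominus> a)))"
  then obtain s t where st: "s \<in> carrier R" "t \<in> carrier R" and vv: "v = vec2 R (y \<otimes> s) (\<ominus> a \<otimes> s \<oplus> x \<otimes> t)"
    unfolding gammaT_img[OF xy(2,1) a_inv_closed[OF a]] by auto
  have "x \<otimes> (y \<otimes> s) = (x \<otimes> y) \<otimes> s" using xy st by algebra
  also have "\<dots> = \<zero>" using exact_xy[OF ex] st by simp
  finally have 1: "x \<otimes> (y \<otimes> s) = \<zero>" .
  have "a \<otimes> (y \<otimes> s) \<oplus> y \<otimes> (\<ominus> a \<otimes> s \<oplus> x \<otimes> t) = (x \<otimes> y) \<otimes> t" using xy a st by algebra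
  also have "\<dots> = \<zero>" using exact_xy[OF ex] st by simp
  finally have 2: "a \<otimes> (y \<otimes> s) \<oplus> y \<otimes> (\<ominus> a \<otimes> s \<oplus> x \<otimes> t) = \<zero>" .
  show "v \<in> {v \<in> vecs R 2. mat_app R 2 2 (mat_transpose (gamma_mat R x y a)) v = vzero R}"
    unfolding vv using gammaT_app[OF xy a, of "y \<otimes> s" "\<ominus> a \<otimes> s \<oplus> x \<otimes> t"] 1 2 xy a st by (simp add: vzero_vec2)
qed


end

definition kerm :: "('a, 'b) ring_scheme \<Rightarrow> (nat \<Rightarrow> nat \<Rightarrow> 'a) \<Rightarrow> (nat \<Rightarrow> 'a) set" where
  "kerm R D = {v \<in> vecs R 2. mat_app R 2 2 D v = vzero R}"

definition exact4 :: "('a, 'b) ring_scheme \<Rightarrow> (nat \<Rightarrow> nat \<Rightarrow> 'a) \<Rightarrow> (nat \<Rightarrow> nat \<Rightarrow> 'a) \<Rightarrow> bool" where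
  "exact4 R D E \<longleftrightarrow> mat_carrier R 2 2 D \<and> mat_carrier R 2 2 E \<and>
     kerm R D = mat_image R 2 2 E \<and> kerm R E = mat_image R 2 2 D \<and>
     kerm R (mat_transpose D) = mat_image R 2 2 (mat_transpose E) \<and>
     kerm R (mat_transpose E) = mat_image R 2 2 (mat_transpose D)"

context cring begin

lemma exact4_gamma: assumes ex: "exact_zd_pair R x y" and a: "a \<in> carrier R"
  shows "exact4 R (gamma_mat R x y a) (eta_mat R x y a)"
proof -
  have xy: "x \<in> carrier R" "y \<in> carrier R" using exact_carr[OF ex] by auto
  have h: "\<ominus> (\<ominus> a) = a" using a by simp
  have 1: "kerm R (gamma_mat R x y a) = mat_image R 2 2 (eta_mat R x y a)"
    unfolding kerm_def eta_gamma by (rule exact_L1[OF ex a])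
  have 2: "kerm R (eta_mat R x y a) = mat_image R 2 2 (gamma_mat R x y a)"
    unfolding kerm_def eta_gamma using exact_L1[OF exact_sym[OF ex] a_inv_closed[OF a]] unfolding h .
  have 3: "kerm R (mat_transpose (gamma_mat R x y a)) = mat_image R 2 2 (mat_transpose (eta_mat R x y a))"
    unfolding kerm_def eta_gamma by (rule exact_L2[OF ex a])
  have 4: "kerm R (mat_transpose (eta_mat R x y a)) = mat_image R 2 2 (mat_transpose (gamma_mat R x y a))"
    unfolding kerm_def eta_gamma using exact_L2[OF exact_sym[OF ex] a_inv_closed[OF a]] unfolding h .
  show ?thesis unfolding exact4_def using 1 2 3 4 gamma_carrier[OF xy a] gamma_carrier[OF xy(2,1) a_inv_closed[OF a]]
    by (simp add: eta_gamma)
qed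

lemma exact4_sym: "exact4 R D E \<Longrightarrow> exact4 R E D"
  unfolding exact4_def by auto

lemma coker_fin_gen: assumes D: "mat_carrier R 2 2 D" shows "fin_gen R (coker R 2 2 D)"
proof -
  let ?M = "coker R 2 2 D"
  interpret Mm: module R ?M by (rule coker_module[OF D])
  define a0 where "a0 = cst R D (vec2 R \<one> \<zero>)"
  define a1 where "a1 = cst R D (vec2 R \<zero> \<one>)"
  have C: "v \<in> vecs R 2 \<Longrightarrow> cst R D v \<in> carrier ?M" for v unfolding coker_carrier by auto
  have a01: "a0 \<in> carrier ?M" "a1 \<in> carrier ?M" unfolding a0_def a1_def by (auto intro!: C)
  have key: "cst R D (vec2 R p q) = p \<odot>\<^bsub>?M\<^esub> a0 \<oplus>\<^bsub>?M\<^esub> q \<odot>\<^bsub>?M\<^esub> a1" if "p \<in> carrier R" "q \<in> carrier R" for p q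
    unfolding a0_def a1_def using that by (simp add: coker_smult[OF D] coker_add[OF D])
  show ?thesis unfolding fin_gen_def
  proof (intro exI[where x="{a0, a1}"] conjI ballI)
    show "finite {a0, a1}" by simp
    show "{a0, a1} \<subseteq> carrier ?M" using a01 by simp
    fix u assume "u \<in> carrier ?M"
    then obtain v where v: "v \<in> vecs R 2" "u = cst R D v" unfolding coker_carrier by auto
    then obtain p q where pq: "p \<in> carrier R" "q \<in> carrier R" "v = vec2 R p q" by (elim vecs2_cases)
    show "\<exists>c. c \<in> {a0, a1} \<rightarrow> carrier R \<and> u = finsum ?M (\<lambda>s. c s \<odot>\<^bsub>?M\<^esub> s) {a0, a1}"
    proof (cases "a0 = a1")
      case True
      have "u = (p \<oplus> q) \<odot>\<^bsub>?M\<^esub> a0" using key[OF pq(1,2)] v pq True a01 by (simp add: Mm.smult_l_distr)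
      then show ?thesis using True pq a01 by (intro exI[where x="\<lambda>_. p \<oplus> q"]) (simp add: Mm.finsum_singleton)
    next
      case False
      have "finsum ?M (\<lambda>s. (if s = a0 then p else q) \<odot>\<^bsub>?M\<^esub> s) {a0, a1} = p \<odot>\<^bsub>?M\<^esub> a0 \<oplus>\<^bsub>?M\<^esub> q \<odot>\<^bsub>?M\<^esub> a1"
        using False a01 pq by (simp add: Mm.finsum_insert Mm.finsum_singleton)
      then show ?thesis using key[OF pq(1,2)] v pq
        by (intro exI[where x="\<lambda>s. if s = a0 then p else q"]) auto
    qed
  qed
qed

lemma free_mod_simps [simp]: "carrier (free_mod R n) = vecs R n" "ring.add (free_mod R n) = vadd R"
  "module.smult (free_mod R n) = vsmult R" "ring.zero (free_mod R n) = vzero R"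
  unfolding free_mod_def by simp_all

lemma vneg_zero: "vneg R (vzero R) = vzero R" by (simp add: vzero_vec2)

lemma cst_zero_iff: "mat_carrier R 2 2 D \<Longrightarrow> v \<in> vecs R 2 \<Longrightarrow> cst R D v = cst R D (vzero R) \<longleftrightarrow> v \<in> mat_image R 2 2 D"
  using cst_eq_iff[of D v "vzero R"] by (simp add: vneg_zero)

lemma coker_ext: assumes ex: "exact4 R D E" shows "ext_vanishes R (coker R 2 2 D)"
proof -
  have D: "mat_carrier R 2 2 D" and E: "mat_carrier R 2 2 E" using ex unfolding exact4_def by auto
  define d where "d = (\<lambda>k::nat. if odd k then D else E)"
  have d1: "d 1 = D" "d (Suc 0) = D" unfolding d_def by simp_all
  have dS: "d (Suc k) = (if even k then D else E)" "d (Suc (Suc k)) = (if even k then E else D)" for k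
    unfolding d_def by auto
  have lin: "linear_map R (free_mod R 2) (coker R 2 2 D) (cst R D)"
    unfolding linear_map_def using coker_add[OF D] coker_smult[OF D] by (auto simp: coker_carrier)
  have res: "free_resolution R (coker R 2 2 D) (\<lambda>_. 2) d (cst R D)"
    unfolding free_resolution_def
  proof (intro conjI allI)
    show "mat_carrier R ((\<lambda>_. 2) k) ((\<lambda>_. 2) (Suc k)) (d (Suc k))" for k using D E dS by simp
    show "linear_map R (free_mod R ((\<lambda>_. 2) 0)) (coker R 2 2 D) (cst R D)" using lin by simp
    show "cst R D ` vecs R ((\<lambda>_. 2) 0) = carrier (coker R 2 2 D)" by (simp add: coker_carrier)
    show "{v \<in> vecs R ((\<lambda>_. 2) 0). cst R D v = \<zero>\<^bsub>coker R 2 2 D\<^esub>} = mat_image R ((\<lambda>_. 2) 0) ((\<lambda>_. 2) 1) (d 1)"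
      using cst_zero_iff[OF D] img_vecs[OF D] by (auto simp: d1 coker_zero[OF D])
    show "{v \<in> vecs R ((\<lambda>_. 2) (Suc k)). mat_app R ((\<lambda>_. 2) k) ((\<lambda>_. 2) (Suc k)) (d (Suc k)) v = vzero R} =
          mat_image R ((\<lambda>_. 2) (Suc k)) ((\<lambda>_. 2) (Suc (Suc k))) (d (Suc (Suc k)))" for k
      using ex unfolding exact4_def kerm_def dS by auto
  qed
  show ?thesis unfolding ext_vanishes_def
    apply (rule exI[where x="\<lambda>_. 2"], rule exI[where x=d], rule exI[where x="cst R D"])
    using res ex unfolding exact4_def kerm_def dS by auto
qed

lemma coker_iso: assumes D: "mat_carrier R 2 2 D"
  and f: "\<And>v. v \<in> vecs R 2 \<Longrightarrow> f (cst R D v) = eps v"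
  and cl: "\<And>v. v \<in> vecs R 2 \<Longrightarrow> eps v \<in> carrier N"
  and ad: "\<And>v w. v \<in> vecs R 2 \<Longrightarrow> w \<in> vecs R 2 \<Longrightarrow> eps (vadd R v w) = eps v \<oplus>\<^bsub>N\<^esub> eps w"
  and sm: "\<And>r v. r \<in> carrier R \<Longrightarrow> v \<in> vecs R 2 \<Longrightarrow> eps (vsmult R r v) = r \<odot>\<^bsub>N\<^esub> eps v"
  and su: "\<And>z. z \<in> carrier N \<Longrightarrow> \<exists>v\<in>vecs R 2. z = eps v"
  and inj: "\<And>v w. v \<in> vecs R 2 \<Longrightarrow> w \<in> vecs R 2 \<Longrightarrow> eps v = eps w \<Longrightarrow> cst R D v = cst R D w"
  shows "mod_iso R (coker R 2 2 D) N f"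
  unfolding mod_iso_def linear_map_def
proof (intro conjI ballI)
  show "f \<in> carrier (coker R 2 2 D) \<rightarrow> carrier N" using f cl by (auto simp: coker_carrier)
  show "f (u \<oplus>\<^bsub>coker R 2 2 D\<^esub> v) = f u \<oplus>\<^bsub>N\<^esub> f v" if "u \<in> carrier (coker R 2 2 D)" "v \<in> carrier (coker R 2 2 D)" for u v
    using that f ad by (auto simp: coker_carrier coker_add[OF D])
  show "f (r \<odot>\<^bsub>coker R 2 2 D\<^esub> v) = r \<odot>\<^bsub>N\<^esub> f v" if "r \<in> carrier R" "v \<in> carrier (coker R 2 2 D)" for r v
    using that f sm by (auto simp: coker_carrier coker_smult[OF D])
  show "bij_betw f (carrier (coker R 2 2 D)) (carrier N)"
    unfolding bij_betw_def
  proof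
    show "inj_on f (carrier (coker R 2 2 D))"
    proof (rule inj_onI)
      fix P Q assume "P \<in> carrier (coker R 2 2 D)" "Q \<in> carrier (coker R 2 2 D)" "f P = f Q"
      then obtain v w where "v \<in> vecs R 2" "w \<in> vecs R 2" "P = cst R D v" "Q = cst R D w" "f P = f Q"
        unfolding coker_carrier by auto
      then show "P = Q" using inj[of v w] f by simp
    qed
    show "f ` carrier (coker R 2 2 D) = carrier N"
    proof
      show "f ` carrier (coker R 2 2 D) \<subseteq> carrier N" using f cl by (auto simp: coker_carrier)
      show "carrier N \<subseteq> f ` carrier (coker R 2 2 D)"
      proof
        fix z assume "z \<in> carrier N"
        then obtain v where "v \<in> vecs R 2" "z = eps v" using su by auto
        then have "z = f (cst R D v)" using f by simp
        then show "z \<in> f ` carrier (coker R 2 2 D)" using \<open>v \<in> vecs R 2\<close> unfolding coker_carrier by blast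
      qed
    qed
  qed
qed

lemma cst_decomp: assumes D: "mat_carrier R 2 2 D" and "p \<in> carrier R" "q \<in> carrier R"
  shows "cst R D (vec2 R p q) = p \<odot>\<^bsub>coker R 2 2 D\<^esub> cst R D (vec2 R \<one> \<zero>) \<oplus>\<^bsub>coker R 2 2 D\<^esub> q \<odot>\<^bsub>coker R 2 2 D\<^esub> cst R D (vec2 R \<zero> \<one>)"
  using assms by (simp add: coker_smult[OF D] coker_add[OF D])

lemma cst_carrier: "v \<in> vecs R 2 \<Longrightarrow> cst R D v \<in> carrier (coker R 2 2 D)"
  unfolding coker_carrier by auto

lemma Dual_carrier: "carrier (Dual R M) = {f. linear_map R M (ring_mod R) f \<and> f \<in> extensional (carrier M)}"
  unfolding Dual_def Hom_mod_def by simp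

lemma Dual_add: "f \<oplus>\<^bsub>Dual R M\<^esub> g = (\<lambda>u\<in>carrier M. f u \<oplus> g u)"
  unfolding Dual_def Hom_mod_def ring_mod_def by simp

lemma Dual_smult: "r \<odot>\<^bsub>Dual R M\<^esub> f = (\<lambda>u\<in>carrier M. r \<otimes> f u)"
  unfolding Dual_def Hom_mod_def ring_mod_def by simp

lemma Dual_zero: "\<zero>\<^bsub>Dual R M\<^esub> = (\<lambda>u\<in>carrier M. \<zero>)"
  unfolding Dual_def Hom_mod_def ring_mod_def by simp

lemma linear_ring_mod: "linear_map R M (ring_mod R) f \<longleftrightarrow>
   f \<in> carrier M \<rightarrow> carrier R \<and> (\<forall>u\<in>carrier M. \<forall>v\<in>carrier M. f (u \<oplus>\<^bsub>M\<^esub> v) = f u \<oplus> f v) \<and>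
   (\<forall>r\<in>carrier R. \<forall>v\<in>carrier M. f (r \<odot>\<^bsub>M\<^esub> v) = r \<otimes> f v)"
  unfolding linear_map_def ring_mod_def by simp

end

definition lin :: "('a, 'b) ring_scheme \<Rightarrow> (nat \<Rightarrow> 'a) \<Rightarrow> (nat \<Rightarrow> 'a) \<Rightarrow> 'a" where
  "lin R v w = v 0 \<otimes>\<^bsub>R\<^esub> w 0 \<oplus>\<^bsub>R\<^esub> v 1 \<otimes>\<^bsub>R\<^esub> w 1"

definition rep :: "('a, 'b) ring_scheme \<Rightarrow> (nat \<Rightarrow> nat \<Rightarrow> 'a) \<Rightarrow> (nat \<Rightarrow> 'a) set \<Rightarrow> (nat \<Rightarrow> 'a)" where
  "rep R D P = (SOME v. v \<in> vecs R 2 \<and> P = cst R D v)"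

definition phi :: "('a, 'b) ring_scheme \<Rightarrow> (nat \<Rightarrow> nat \<Rightarrow> 'a) \<Rightarrow> (nat \<Rightarrow> 'a) \<Rightarrow> (nat \<Rightarrow> 'a) set \<Rightarrow> 'a" where
  "phi R D w = (\<lambda>P\<in>carrier (coker R 2 2 D). lin R (rep R D P) w)"

context cring begin

lemma lin_vec2 [simp]: "lin R (vec2 R a b) (vec2 R c d) = a \<otimes> c \<oplus> b \<otimes> d"
  unfolding lin_def by simp

lemma lin_carr [simp]: "v \<in> vecs R 2 \<Longrightarrow> w \<in> vecs R 2 \<Longrightarrow> lin R v w \<in> carrier R"
  unfolding lin_def using vecs_carr by auto

lemma lin_comm: "v \<in> vecs R 2 \<Longrightarrow> w \<in> vecs R 2 \<Longrightarrow> lin R v w = lin R w v"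
  unfolding lin_def using vecs_carr by (simp add: m_comm)

lemma lin_add_l: assumes "u \<in> vecs R 2" "v \<in> vecs R 2" "w \<in> vecs R 2"
  shows "lin R (vadd R u v) w = lin R u w \<oplus> lin R v w"
proof -
  obtain a b where 1: "a \<in> carrier R" "b \<in> carrier R" "u = vec2 R a b" using assms(1) by (rule vecs2_cases)
  obtain c d where 2: "c \<in> carrier R" "d \<in> carrier R" "v = vec2 R c d" using assms(2) by (rule vecs2_cases)
  obtain e f where 3: "e \<in> carrier R" "f \<in> carrier R" "w = vec2 R e f" using assms(3) by (rule vecs2_cases)
  have "(a \<oplus> c) \<otimes> e \<oplus> (b \<oplus> d) \<otimes> f = a \<otimes> e \<oplus> b \<otimes> f \<oplus> (c \<otimes> e \<oplus> d \<otimes> f)" using 1 2 3 by algebra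
  then show ?thesis using 1 2 3 by simp
qed

lemma lin_add_r: "u \<in> vecs R 2 \<Longrightarrow> v \<in> vecs R 2 \<Longrightarrow> w \<in> vecs R 2 \<Longrightarrow>
   lin R w (vadd R u v) = lin R w u \<oplus> lin R w v"
  using lin_add_l lin_comm by simp

lemma lin_smult_l: assumes "r \<in> carrier R" "v \<in> vecs R 2" "w \<in> vecs R 2"
  shows "lin R (vsmult R r v) w = r \<otimes> lin R v w"
proof -
  obtain c d where 2: "c \<in> carrier R" "d \<in> carrier R" "v = vec2 R c d" using assms(2) by (rule vecs2_cases)
  obtain e f where 3: "e \<in> carrier R" "f \<in> carrier R" "w = vec2 R e f" using assms(3) by (rule vecs2_cases)
  have "r \<otimes> c \<otimes> e \<oplus> r \<otimes> d \<otimes> f = r \<otimes> (c \<otimes> e \<oplus> d \<otimes> f)" using assms(1) 2 3 by algebra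
  then show ?thesis using assms(1) 2 3 by simp
qed

lemma lin_smult_r: "r \<in> carrier R \<Longrightarrow> v \<in> vecs R 2 \<Longrightarrow> w \<in> vecs R 2 \<Longrightarrow>
   lin R w (vsmult R r v) = r \<otimes> lin R w v"
  using lin_smult_l lin_comm by simp

lemma lin_zero_l [simp]: "w \<in> vecs R 2 \<Longrightarrow> lin R (vzero R) w = \<zero>"
  by (elim vecs2_cases) (simp add: vzero_vec2)

lemma lin_zero_r [simp]: "w \<in> vecs R 2 \<Longrightarrow> lin R w (vzero R) = \<zero>"
  by (elim vecs2_cases) (simp add: vzero_vec2)

lemma lin_e0: "w \<in> vecs R 2 \<Longrightarrow> lin R (vec2 R \<one> \<zero>) w = w 0"
  by (elim vecs2_cases) simp

lemma lin_e1: "w \<in> vecs R 2 \<Longrightarrow> lin R (vec2 R \<zero> \<one>) w = w 1"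
  by (elim vecs2_cases) simp

lemma vec_eq_lin: "v \<in> vecs R 2 \<Longrightarrow> w \<in> vecs R 2 \<Longrightarrow> lin R (vec2 R \<one> \<zero>) v = lin R (vec2 R \<one> \<zero>) w \<Longrightarrow>
   lin R (vec2 R \<zero> \<one>) v = lin R (vec2 R \<zero> \<one>) w \<Longrightarrow> v = w"
  using vecs_vec2[of v] vecs_vec2[of w] lin_e0 lin_e1 by metis

lemma lin_mat: assumes D: "mat_carrier R 2 2 D" and "s \<in> vecs R 2" "w \<in> vecs R 2"
  shows "lin R (mat_app R 2 2 D s) w = lin R s (mat_app R 2 2 (mat_transpose D) w)"
proof -
  obtain c d where 2: "c \<in> carrier R" "d \<in> carrier R" "s = vec2 R c d" using assms(2) by (rule vecs2_cases)
  obtain e f where 3: "e \<in> carrier R" "f \<in> carrier R" "w = vec2 R e f" using assms(3) by (rule vecs2_cases)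
  note c = mat_carrier2[OF D]
  have "(D 0 0 \<otimes> c \<oplus> D 0 1 \<otimes> d) \<otimes> e \<oplus> (D 1 0 \<otimes> c \<oplus> D 1 1 \<otimes> d) \<otimes> f =
        c \<otimes> (D 0 0 \<otimes> e \<oplus> D 1 0 \<otimes> f) \<oplus> d \<otimes> (D 0 1 \<otimes> e \<oplus> D 1 1 \<otimes> f)" using 2 3 c by algebra
  then show ?thesis using 2 3 D mat_carrier_T[OF D] by (simp add: mat_transpose_def)
qed

lemma rep_prop: assumes "v \<in> vecs R 2" shows "rep R D (cst R D v) \<in> vecs R 2 \<and> cst R D (rep R D (cst R D v)) = cst R D v"
proof -
  have "\<exists>u. u \<in> vecs R 2 \<and> cst R D v = cst R D u" using assms by auto
  then show ?thesis unfolding rep_def by (metis (mono_tags, lifting) someI_ex)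
qed

lemma kerm_D: "z \<in> kerm R D \<longleftrightarrow> z \<in> vecs R 2 \<and> mat_app R 2 2 D z = vzero R"
  unfolding kerm_def by simp

lemma phi_cst: assumes D: "mat_carrier R 2 2 D" and z: "z \<in> kerm R (mat_transpose D)" and v: "v \<in> vecs R 2"
  shows "phi R D z (cst R D v) = lin R v z"
proof -
  define r where "r = rep R D (cst R D v)"
  have r: "r \<in> vecs R 2" "cst R D r = cst R D v" using rep_prop[OF v] unfolding r_def by auto
  have zv: "z \<in> vecs R 2" "mat_app R 2 2 (mat_transpose D) z = vzero R" using z by (auto simp: kerm_D)
  have "vadd R r (vneg R v) \<in> mat_image R 2 2 D" using r cst_eq_iff[OF D r(1) v] by simp
  then obtain s where s: "s \<in> vecs R 2" "vadd R r (vneg R v) = mat_app R 2 2 D s" unfolding mat_image_def by auto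
  have dv: "mat_app R 2 2 D s \<in> vecs R 2" using D s by simp
  have r_eq: "r = vadd R v (mat_app R 2 2 D s)" using vsub_cancel2[OF r(1) v] s(2) by simp
  have "lin R r z = lin R v z \<oplus> lin R (mat_app R 2 2 D s) z"
    unfolding r_eq by (rule lin_add_l[OF v dv zv(1)])
  also have "lin R (mat_app R 2 2 D s) z = \<zero>" using lin_mat[OF D s(1) zv(1)] zv s by simp
  finally have "lin R r z = lin R v z" using v zv by simp
  moreover have "phi R D z (cst R D v) = lin R r z" unfolding phi_def r_def using cst_carrier[OF v] by simp
  ultimately show ?thesis by simp
qed

lemma phi_carrier: assumes D: "mat_carrier R 2 2 D" and z: "z \<in> kerm R (mat_transpose D)"
  shows "phi R D z \<in> carrier (Dual R (coker R 2 2 D))"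
proof -
  have zv: "z \<in> vecs R 2" using z by (auto simp: kerm_D)
  have E: "P \<in> carrier (coker R 2 2 D) \<Longrightarrow> (\<And>v. v \<in> vecs R 2 \<Longrightarrow> P = cst R D v \<Longrightarrow> thesis) \<Longrightarrow> thesis" for P thesis
    unfolding coker_carrier by auto
  note pc = phi_cst[OF D z]
  show ?thesis unfolding Dual_carrier linear_ring_mod
  proof (intro CollectI conjI ballI)
    show "phi R D z \<in> carrier (coker R 2 2 D) \<rightarrow> carrier R"
    proof
      fix P assume "P \<in> carrier (coker R 2 2 D)" then show "phi R D z P \<in> carrier R"
        by (elim E) (simp add: pc zv)
    qed
    show "phi R D z (P \<oplus>\<^bsub>coker R 2 2 D\<^esub> Q) = phi R D z P \<oplus> phi R D z Q"
      if "P \<in> carrier (coker R 2 2 D)" "Q \<in> carrier (coker R 2 2 D)" for P Q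
      using that by (elim E) (simp add: pc coker_add[OF D] lin_add_l zv)
    show "phi R D z (r \<odot>\<^bsub>coker R 2 2 D\<^esub> P) = r \<otimes> phi R D z P"
      if "r \<in> carrier R" "P \<in> carrier (coker R 2 2 D)" for r P
      using that by (elim E) (simp add: pc coker_smult[OF D] lin_smult_l zv)
    show "phi R D z \<in> extensional (carrier (coker R 2 2 D))" unfolding phi_def by simp
  qed
qed

lemma phi_eq: assumes D: "mat_carrier R 2 2 D" and z: "z \<in> kerm R (mat_transpose D)" and z': "z' \<in> kerm R (mat_transpose D)"
  and eq: "phi R D z = phi R D z'" shows "z = z'"
proof -
  have zv: "z \<in> vecs R 2" "z' \<in> vecs R 2" using z z' by (auto simp: kerm_D)
  have "phi R D z (cst R D (vec2 R \<one> \<zero>)) = phi R D z' (cst R D (vec2 R \<one> \<zero>))"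
       "phi R D z (cst R D (vec2 R \<zero> \<one>)) = phi R D z' (cst R D (vec2 R \<zero> \<one>))" using eq by simp_all
  then show ?thesis using phi_cst[OF D z] phi_cst[OF D z'] vec_eq_lin[OF zv] by simp
qed

lemma kerm_add: "mat_carrier R 2 2 D \<Longrightarrow> z \<in> kerm R D \<Longrightarrow> z' \<in> kerm R D \<Longrightarrow> vadd R z z' \<in> kerm R D"
  unfolding kerm_def using mat_app_vadd by (simp add: vzero_vec2)

lemma kerm_smult: "mat_carrier R 2 2 D \<Longrightarrow> r \<in> carrier R \<Longrightarrow> z \<in> kerm R D \<Longrightarrow> vsmult R r z \<in> kerm R D"
  unfolding kerm_def using mat_app_vsmult by (simp add: vzero_vec2)

lemma phi_add: assumes D: "mat_carrier R 2 2 D" and z: "z \<in> kerm R (mat_transpose D)" and z': "z' \<in> kerm R (mat_transpose D)"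
  shows "phi R D (vadd R z z') = phi R D z \<oplus>\<^bsub>Dual R (coker R 2 2 D)\<^esub> phi R D z'"
proof -
  have zv: "z \<in> vecs R 2" "z' \<in> vecs R 2" using z z' by (auto simp: kerm_D)
  have zz: "vadd R z z' \<in> kerm R (mat_transpose D)" by (rule kerm_add[OF mat_carrier_T[OF D] z z'])
  show ?thesis unfolding Dual_add
  proof (rule ext)
    fix P show "phi R D (vadd R z z') P = (\<lambda>u\<in>carrier (coker R 2 2 D). phi R D z u \<oplus> phi R D z' u) P"
    proof (cases "P \<in> carrier (coker R 2 2 D)")
      case True
      then obtain v where "v \<in> vecs R 2" "P = cst R D v" unfolding coker_carrier by auto
      then show ?thesis using phi_cst[OF D zz] phi_cst[OF D z] phi_cst[OF D z'] lin_add_r zv cst_carrier by simp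
    next
      case False then show ?thesis unfolding phi_def by simp
    qed
  qed
qed

lemma phi_smult: assumes D: "mat_carrier R 2 2 D" and r: "r \<in> carrier R" and z: "z \<in> kerm R (mat_transpose D)"
  shows "phi R D (vsmult R r z) = r \<odot>\<^bsub>Dual R (coker R 2 2 D)\<^esub> phi R D z"
proof -
  have zv: "z \<in> vecs R 2" using z by (auto simp: kerm_D)
  have zz: "vsmult R r z \<in> kerm R (mat_transpose D)" by (rule kerm_smult[OF mat_carrier_T[OF D] r z])
  show ?thesis unfolding Dual_smult
  proof (rule ext)
    fix P show "phi R D (vsmult R r z) P = (\<lambda>u\<in>carrier (coker R 2 2 D). r \<otimes> phi R D z u) P"
    proof (cases "P \<in> carrier (coker R 2 2 D)")
      case True
      then obtain v where "v \<in> vecs R 2" "P = cst R D v" unfolding coker_carrier by auto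
      then show ?thesis using phi_cst[OF D zz] phi_cst[OF D z] lin_smult_r r zv cst_carrier by simp
    next
      case False then show ?thesis unfolding phi_def by simp
    qed
  qed
qed

lemma phi_zero: assumes D: "mat_carrier R 2 2 D"
  shows "phi R D (vzero R) = \<zero>\<^bsub>Dual R (coker R 2 2 D)\<^esub>"
proof -
  have zz: "vzero R \<in> kerm R (mat_transpose D)"
    using mat_app_zero[OF mat_carrier_T[OF D]] unfolding kerm_def by simp
  show ?thesis unfolding Dual_zero
  proof (rule ext)
    fix P show "phi R D (vzero R) P = (\<lambda>u\<in>carrier (coker R 2 2 D). \<zero>) P"
    proof (cases "P \<in> carrier (coker R 2 2 D)")
      case True
      then obtain v where "v \<in> vecs R 2" "P = cst R D v" unfolding coker_carrier by auto
      then show ?thesis using phi_cst[OF D zz] cst_carrier by simp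
    next
      case False then show ?thesis unfolding phi_def by simp
    qed
  qed
qed

lemma dual_surj: assumes D: "mat_carrier R 2 2 D" and f: "f \<in> carrier (Dual R (coker R 2 2 D))"
  shows "\<exists>z\<in>kerm R (mat_transpose D). f = phi R D z"
proof -
  let ?M = "coker R 2 2 D"
  define e0 where "e0 = vec2 R \<one> \<zero>"
  define e1 where "e1 = vec2 R \<zero> \<one>"
  have e: "e0 \<in> vecs R 2" "e1 \<in> vecs R 2" unfolding e0_def e1_def by auto
  have fl: "f \<in> carrier ?M \<rightarrow> carrier R" "\<And>u v. u \<in> carrier ?M \<Longrightarrow> v \<in> carrier ?M \<Longrightarrow> f (u \<oplus>\<^bsub>?M\<^esub> v) = f u \<oplus> f v"
    "\<And>r v. r \<in> carrier R \<Longrightarrow> v \<in> carrier ?M \<Longrightarrow> f (r \<odot>\<^bsub>?M\<^esub> v) = r \<otimes> f v" "f \<in> extensional (carrier ?M)"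
    using f unfolding Dual_carrier linear_ring_mod by auto
  have fe: "f (cst R D e0) \<in> carrier R" "f (cst R D e1) \<in> carrier R" using fl(1) cst_carrier e by auto
  define z where "z = vec2 R (f (cst R D e0)) (f (cst R D e1))"
  have zv: "z \<in> vecs R 2" unfolding z_def using fe by simp
  have fv: "f (cst R D v) = lin R v z" if v: "v \<in> vecs R 2" for v
  proof -
    obtain p q where pq: "p \<in> carrier R" "q \<in> carrier R" "v = vec2 R p q" using v by (rule vecs2_cases)
    have c0: "p \<odot>\<^bsub>?M\<^esub> cst R D e0 \<in> carrier ?M" "q \<odot>\<^bsub>?M\<^esub> cst R D e1 \<in> carrier ?M"
      using pq e by (simp_all add: coker_smult[OF D] cst_carrier)
    have "f (cst R D v) = f (p \<odot>\<^bsub>?M\<^esub> cst R D e0 \<oplus>\<^bsub>?M\<^esub> q \<odot>\<^bsub>?M\<^esub> cst R D e1)"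
      using cst_decomp[OF D pq(1,2)] pq(3) unfolding e0_def e1_def by simp
    also have "\<dots> = f (p \<odot>\<^bsub>?M\<^esub> cst R D e0) \<oplus> f (q \<odot>\<^bsub>?M\<^esub> cst R D e1)" by (rule fl(2)[OF c0])
    also have "\<dots> = p \<otimes> f (cst R D e0) \<oplus> q \<otimes> f (cst R D e1)"
      using fl(3)[OF pq(1) cst_carrier[OF e(1)]] fl(3)[OF pq(2) cst_carrier[OF e(2)]] by simp
    also have "\<dots> = lin R v z" unfolding z_def pq(3) by simp
    finally show ?thesis .
  qed
  have z0: "lin R (mat_app R 2 2 D s) z = \<zero>" if s: "s \<in> vecs R 2" for s
  proof -
    have dv: "mat_app R 2 2 D s \<in> vecs R 2" using D s by simp
    have "mat_app R 2 2 D s \<in> mat_image R 2 2 D" unfolding mat_image_def using s by auto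
    then have "cst R D (mat_app R 2 2 D s) = cst R D (vzero R)" using cst_zero_iff[OF D dv] by simp
    then have "f (cst R D (mat_app R 2 2 D s)) = f (cst R D (vzero R))" by simp
    then show ?thesis using fv[OF dv] fv[OF vzero_vecs] zv by simp
  qed
  have "mat_app R 2 2 (mat_transpose D) z = vzero R"
  proof -
    have t: "mat_app R 2 2 (mat_transpose D) z \<in> vecs R 2" using mat_carrier_T[OF D] zv by simp
    have "lin R e0 (mat_app R 2 2 (mat_transpose D) z) = lin R (mat_app R 2 2 D e0) z"
      using lin_mat[OF D e(1) zv] by simp
    also have "\<dots> = lin R e0 (vzero R)" using z0[OF e(1)] e by simp
    finally have 1: "lin R e0 (mat_app R 2 2 (mat_transpose D) z) = lin R e0 (vzero R)" .
    have "lin R e1 (mat_app R 2 2 (mat_transpose D) z) = lin R (mat_app R 2 2 D e1) z"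
      using lin_mat[OF D e(2) zv] by simp
    also have "\<dots> = lin R e1 (vzero R)" using z0[OF e(2)] e by simp
    finally have 2: "lin R e1 (mat_app R 2 2 (mat_transpose D) z) = lin R e1 (vzero R)" .
    show ?thesis using vec_eq_lin[OF t vzero_vecs] 1 2 unfolding e0_def e1_def by simp
  qed
  then have zk: "z \<in> kerm R (mat_transpose D)" using zv by (simp add: kerm_D)
  have "f = phi R D z"
  proof (rule ext)
    fix P show "f P = phi R D z P"
    proof (cases "P \<in> carrier ?M")
      case True
      then obtain v where "v \<in> vecs R 2" "P = cst R D v" unfolding coker_carrier by auto
      then show ?thesis using fv phi_cst[OF D zk] by simp
    next
      case False then show ?thesis using fl(4) unfolding phi_def by (simp add: extensional_def)
    qed
  qed
  then show ?thesis using zk by blast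
qed

end

definition epsd :: "('a, 'b) ring_scheme \<Rightarrow> (nat \<Rightarrow> nat \<Rightarrow> 'a) \<Rightarrow> (nat \<Rightarrow> nat \<Rightarrow> 'a) \<Rightarrow> (nat \<Rightarrow> 'a) \<Rightarrow> ((nat \<Rightarrow> 'a) set \<Rightarrow> 'a)" where
  "epsd R D E w = phi R D (mat_app R 2 2 (mat_transpose E) w)"

locale ex4 = cring +
  fixes D E
  assumes ex: "exact4 R D E"
begin

lemma D: "mat_carrier R 2 2 D" and E: "mat_carrier R 2 2 E"
  and DT: "mat_carrier R 2 2 (mat_transpose D)" and ET: "mat_carrier R 2 2 (mat_transpose E)"
  and kD: "kerm R D = mat_image R 2 2 E" and kE: "kerm R E = mat_image R 2 2 D"
  and kDT: "kerm R (mat_transpose D) = mat_image R 2 2 (mat_transpose E)"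
  and kET: "kerm R (mat_transpose E) = mat_image R 2 2 (mat_transpose D)"
  using ex mat_carrier_T unfolding exact4_def by auto

lemma ET_k: "w \<in> vecs R 2 \<Longrightarrow> mat_app R 2 2 (mat_transpose E) w \<in> kerm R (mat_transpose D)"
  unfolding kDT mat_image_def by auto

lemma epsd_carrier: "w \<in> vecs R 2 \<Longrightarrow> epsd R D E w \<in> carrier (Dual R (coker R 2 2 D))"
  unfolding epsd_def by (rule phi_carrier[OF D ET_k])

lemma epsd_add: "w \<in> vecs R 2 \<Longrightarrow> w' \<in> vecs R 2 \<Longrightarrow>
   epsd R D E (vadd R w w') = epsd R D E w \<oplus>\<^bsub>Dual R (coker R 2 2 D)\<^esub> epsd R D E w'"
  unfolding epsd_def using mat_app_vadd[OF ET] phi_add[OF D ET_k ET_k] by simp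

lemma epsd_smult: "r \<in> carrier R \<Longrightarrow> w \<in> vecs R 2 \<Longrightarrow>
   epsd R D E (vsmult R r w) = r \<odot>\<^bsub>Dual R (coker R 2 2 D)\<^esub> epsd R D E w"
  unfolding epsd_def using mat_app_vsmult[OF ET] phi_smult[OF D _ ET_k] by simp

lemma epsd_surj: "f \<in> carrier (Dual R (coker R 2 2 D)) \<Longrightarrow> \<exists>w\<in>vecs R 2. f = epsd R D E w"
  using dual_surj[OF D] unfolding kDT epsd_def mat_image_def by auto

lemma epsd_cst: "w \<in> vecs R 2 \<Longrightarrow> v \<in> vecs R 2 \<Longrightarrow> epsd R D E w (cst R D v) = lin R (mat_app R 2 2 E v) w"
  unfolding epsd_def using phi_cst[OF D ET_k] lin_mat[OF E] by simp

lemma epsd_eq: assumes "w \<in> vecs R 2" "w' \<in> vecs R 2" "epsd R D E w = epsd R D E w'"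
  shows "mat_app R 2 2 (mat_transpose E) w = mat_app R 2 2 (mat_transpose E) w'"
  using phi_eq[OF D ET_k ET_k] assms unfolding epsd_def by blast

lemma zero_k: "vzero R \<in> kerm R (mat_transpose D)"
  using mat_app_zero[OF DT] unfolding kerm_def by simp

lemma epsd_zero_iff: assumes w: "w \<in> vecs R 2"
  shows "epsd R D E w = \<zero>\<^bsub>Dual R (coker R 2 2 D)\<^esub> \<longleftrightarrow> w \<in> mat_image R 2 2 (mat_transpose D)"
proof -
  have "epsd R D E w = \<zero>\<^bsub>Dual R (coker R 2 2 D)\<^esub> \<longleftrightarrow> phi R D (mat_app R 2 2 (mat_transpose E) w) = phi R D (vzero R)"
    unfolding epsd_def phi_zero[OF D] ..
  also have "\<dots> \<longleftrightarrow> mat_app R 2 2 (mat_transpose E) w = vzero R"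
    using phi_eq[OF D ET_k[OF w] zero_k] by auto
  also have "\<dots> \<longleftrightarrow> w \<in> mat_image R 2 2 (mat_transpose D)" using w kET unfolding kerm_def by auto
  finally show ?thesis .
qed

lemma dual_ext: "ext_vanishes R (Dual R (coker R 2 2 D))"
proof -
  let ?N = "Dual R (coker R 2 2 D)"
  define d where "d = (\<lambda>k::nat. if odd k then mat_transpose D else mat_transpose E)"
  have d1: "d 1 = mat_transpose D" "d (Suc 0) = mat_transpose D" unfolding d_def by simp_all
  have dS: "d (Suc k) = (if even k then mat_transpose D else mat_transpose E)"
     "d (Suc (Suc k)) = (if even k then mat_transpose E else mat_transpose D)" for k
    unfolding d_def by auto
  have lin: "linear_map R (free_mod R 2) ?N (epsd R D E)"
    unfolding linear_map_def using epsd_carrier epsd_add epsd_smult by auto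
  have res: "free_resolution R ?N (\<lambda>_. 2) d (epsd R D E)"
    unfolding free_resolution_def
  proof (intro conjI allI)
    show "mat_carrier R ((\<lambda>_. 2) k) ((\<lambda>_. 2) (Suc k)) (d (Suc k))" for k using DT ET dS by simp
    show "linear_map R (free_mod R ((\<lambda>_. 2) 0)) ?N (epsd R D E)" using lin by simp
    show "epsd R D E ` vecs R ((\<lambda>_. 2) 0) = carrier ?N"
      using epsd_carrier epsd_surj by auto
    show "{v \<in> vecs R ((\<lambda>_. 2) 0). epsd R D E v = \<zero>\<^bsub>?N\<^esub>} = mat_image R ((\<lambda>_. 2) 0) ((\<lambda>_. 2) 1) (d 1)"
      using epsd_zero_iff img_vecs[OF DT] by (auto simp: d1)
    show "{v \<in> vecs R ((\<lambda>_. 2) (Suc k)). mat_app R ((\<lambda>_. 2) k) ((\<lambda>_. 2) (Suc k)) (d (Suc k)) v = vzero R} =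
          mat_image R ((\<lambda>_. 2) (Suc k)) ((\<lambda>_. 2) (Suc (Suc k))) (d (Suc (Suc k)))" for k
      using kDT kET unfolding kerm_def dS by auto
  qed
  show ?thesis unfolding ext_vanishes_def
    apply (rule exI[where x="\<lambda>_. 2"], rule exI[where x=d], rule exI[where x="epsd R D E"])
    using res kD kE unfolding kerm_def dS by auto
qed


lemma dual_closed_add: "f \<in> carrier (Dual R (coker R 2 2 D)) \<Longrightarrow> g \<in> carrier (Dual R (coker R 2 2 D)) \<Longrightarrow>
   f \<oplus>\<^bsub>Dual R (coker R 2 2 D)\<^esub> g \<in> carrier (Dual R (coker R 2 2 D))"
  using epsd_surj epsd_add epsd_carrier by (metis vadd_vecs)

lemma dual_closed_smult: "r \<in> carrier R \<Longrightarrow> f \<in> carrier (Dual R (coker R 2 2 D)) \<Longrightarrow>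
   r \<odot>\<^bsub>Dual R (coker R 2 2 D)\<^esub> f \<in> carrier (Dual R (coker R 2 2 D))"
  using epsd_surj epsd_smult epsd_carrier by (metis vsmult_vecs)

lemma dual_lin: assumes "f \<in> carrier (Dual R (coker R 2 2 D))"
  shows "f \<in> carrier (coker R 2 2 D) \<rightarrow> carrier R"
    "\<And>u v. u \<in> carrier (coker R 2 2 D) \<Longrightarrow> v \<in> carrier (coker R 2 2 D) \<Longrightarrow> f (u \<oplus>\<^bsub>coker R 2 2 D\<^esub> v) = f u \<oplus> f v"
    "\<And>r v. r \<in> carrier R \<Longrightarrow> v \<in> carrier (coker R 2 2 D) \<Longrightarrow> f (r \<odot>\<^bsub>coker R 2 2 D\<^esub> v) = r \<otimes> f v"
    "f \<in> extensional (carrier (coker R 2 2 D))"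
  using assms unfolding Dual_carrier linear_ring_mod by auto

lemma mat_app_vneg: "mat_carrier R 2 2 Xm \<Longrightarrow> v \<in> vecs R 2 \<Longrightarrow> mat_app R 2 2 Xm (vneg R v) = vneg R (mat_app R 2 2 Xm v)"
  unfolding vneg_def using mat_app_vsmult by simp

lemma bidual_iso: "mod_iso R (coker R 2 2 D) (Dual R (Dual R (coker R 2 2 D))) (bidual_map R (coker R 2 2 D))"
proof -
  let ?M = "coker R 2 2 D" let ?N = "Dual R ?M" let ?NN = "Dual R ?N"
  define eb where "eb v = (\<lambda>f\<in>carrier ?N. f (cst R D v))" for v
  define e0 where "e0 = vec2 R \<one> \<zero>"
  define e1 where "e1 = vec2 R \<zero> \<one>"
  have e: "e0 \<in> vecs R 2" "e1 \<in> vecs R 2" unfolding e0_def e1_def by auto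
  show ?thesis
  proof (rule coker_iso[OF D, where eps=eb])
    show "bidual_map R ?M (cst R D v) = eb v" if "v \<in> vecs R 2" for v
      unfolding bidual_map_def eb_def using cst_carrier[OF that] by simp
    show "eb v \<in> carrier ?NN" if v: "v \<in> vecs R 2" for v
      unfolding Dual_carrier[where M="?N"] linear_ring_mod
    proof (intro CollectI conjI ballI)
      show "eb v \<in> carrier ?N \<rightarrow> carrier R" unfolding eb_def using dual_lin(1) cst_carrier[OF v] by auto
      show "eb v (f \<oplus>\<^bsub>?N\<^esub> g) = eb v f \<oplus> eb v g" if "f \<in> carrier ?N" "g \<in> carrier ?N" for f g
        unfolding eb_def using that dual_closed_add cst_carrier[OF v] by (simp add: Dual_add)
      show "eb v (r \<odot>\<^bsub>?N\<^esub> f) = r \<otimes> eb v f" if "r \<in> carrier R" "f \<in> carrier ?N" for r f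
        unfolding eb_def using that dual_closed_smult cst_carrier[OF v] by (simp add: Dual_smult)
      show "eb v \<in> extensional (carrier ?N)" unfolding eb_def by simp
    qed
    show "eb (vadd R v w) = eb v \<oplus>\<^bsub>?NN\<^esub> eb w" if "v \<in> vecs R 2" "w \<in> vecs R 2" for v w
      unfolding Dual_add[where M="?N"] eb_def
    proof (rule ext)
      fix F show "(\<lambda>f\<in>carrier ?N. f (cst R D (vadd R v w))) F =
        (\<lambda>u\<in>carrier ?N. (\<lambda>f\<in>carrier ?N. f (cst R D v)) u \<oplus> (\<lambda>f\<in>carrier ?N. f (cst R D w)) u) F"
      proof (cases "F \<in> carrier ?N")
        case True
        have "cst R D (vadd R v w) = cst R D v \<oplus>\<^bsub>?M\<^esub> cst R D w" using coker_add[OF D] that by simp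
        then show ?thesis using True dual_lin(2)[OF True] cst_carrier that by simp
      qed simp
    qed
    show "eb (vsmult R r v) = r \<odot>\<^bsub>?NN\<^esub> eb v" if "r \<in> carrier R" "v \<in> vecs R 2" for r v
      unfolding Dual_smult[where M="?N"] eb_def
    proof (rule ext)
      fix F show "(\<lambda>f\<in>carrier ?N. f (cst R D (vsmult R r v))) F =
        (\<lambda>u\<in>carrier ?N. r \<otimes> (\<lambda>f\<in>carrier ?N. f (cst R D v)) u) F"
      proof (cases "F \<in> carrier ?N")
        case True
        have "cst R D (vsmult R r v) = r \<odot>\<^bsub>?M\<^esub> cst R D v" using coker_smult[OF D] that by simp
        then show ?thesis using True dual_lin(3)[OF True] cst_carrier that by simp
      qed simp
    qed
    show "\<exists>u\<in>vecs R 2. F = eb u" if F: "F \<in> carrier ?NN" for F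
    proof -
      have Fl: "F \<in> carrier ?N \<rightarrow> carrier R" "\<And>u v. u \<in> carrier ?N \<Longrightarrow> v \<in> carrier ?N \<Longrightarrow> F (u \<oplus>\<^bsub>?N\<^esub> v) = F u \<oplus> F v"
        "\<And>r v. r \<in> carrier R \<Longrightarrow> v \<in> carrier ?N \<Longrightarrow> F (r \<odot>\<^bsub>?N\<^esub> v) = r \<otimes> F v" "F \<in> extensional (carrier ?N)"
        using F unfolding Dual_carrier[where M="?N"] linear_ring_mod by auto
      have Fe: "F (epsd R D E e0) \<in> carrier R" "F (epsd R D E e1) \<in> carrier R" using Fl(1) epsd_carrier e by auto
      define z where "z = vec2 R (F (epsd R D E e0)) (F (epsd R D E e1))"
      have zv: "z \<in> vecs R 2" unfolding z_def using Fe by simp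
      have Fw: "F (epsd R D E w) = lin R w z" if w: "w \<in> vecs R 2" for w
      proof -
        obtain p q where pq: "p \<in> carrier R" "q \<in> carrier R" "w = vec2 R p q" using w by (rule vecs2_cases)
        have "w = vadd R (vsmult R p e0) (vsmult R q e1)" unfolding pq(3) e0_def e1_def using pq by simp
        then have "epsd R D E w = p \<odot>\<^bsub>?N\<^esub> epsd R D E e0 \<oplus>\<^bsub>?N\<^esub> q \<odot>\<^bsub>?N\<^esub> epsd R D E e1"
          using epsd_add epsd_smult e pq by simp
        moreover have c: "p \<odot>\<^bsub>?N\<^esub> epsd R D E e0 \<in> carrier ?N" "q \<odot>\<^bsub>?N\<^esub> epsd R D E e1 \<in> carrier ?N"
          using dual_closed_smult epsd_carrier e pq by auto
        ultimately have "F (epsd R D E w) = F (p \<odot>\<^bsub>?N\<^esub> epsd R D E e0) \<oplus> F (q \<odot>\<^bsub>?N\<^esub> epsd R D E e1)"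
          using Fl(2) by simp
        also have "\<dots> = p \<otimes> F (epsd R D E e0) \<oplus> q \<otimes> F (epsd R D E e1)"
          using Fl(3) pq epsd_carrier e by simp
        finally show ?thesis unfolding z_def pq(3) by simp
      qed
      have z0: "lin R s (mat_app R 2 2 D z) = \<zero>" if s: "s \<in> vecs R 2" for s
      proof -
        have dv: "mat_app R 2 2 (mat_transpose D) s \<in> vecs R 2" using DT s by simp
        have "mat_app R 2 2 (mat_transpose D) s \<in> mat_image R 2 2 (mat_transpose D)" unfolding mat_image_def using s by auto
        then have "epsd R D E (mat_app R 2 2 (mat_transpose D) s) = epsd R D E (vzero R)"
          using epsd_zero_iff[OF dv] epsd_zero_iff[OF vzero_vecs] img_zero[OF DT] by simp
        then have "lin R (mat_app R 2 2 (mat_transpose D) s) z = lin R (vzero R) z" using Fw[OF dv] Fw[OF vzero_vecs] by simp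
        then show ?thesis using lin_mat[OF DT s zv] zv by simp
      qed
      have Dz: "mat_app R 2 2 D z = vzero R"
      proof -
        have t: "mat_app R 2 2 D z \<in> vecs R 2" using D zv by simp
        show ?thesis using vec_eq_lin[OF t vzero_vecs] z0[OF e(1)] z0[OF e(2)] e unfolding e0_def e1_def by simp
      qed
      then have "z \<in> mat_image R 2 2 E" using kD zv unfolding kerm_def by auto
      then obtain u where u: "u \<in> vecs R 2" "z = mat_app R 2 2 E u" unfolding mat_image_def by auto
      have "F = eb u"
      proof (rule ext)
        fix f show "F f = eb u f"
        proof (cases "f \<in> carrier ?N")
          case True
          then obtain w where w: "w \<in> vecs R 2" "f = epsd R D E w" using epsd_surj by auto
          have "eb u f = lin R z w" unfolding eb_def using True w epsd_cst u by simp
          also have "\<dots> = F f" using Fw[OF w(1)] w zv lin_comm by simp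
          finally show ?thesis by simp
        next
          case False then show ?thesis using Fl(4) unfolding eb_def by (simp add: extensional_def)
        qed
      qed
      then show ?thesis using u by auto
    qed
    show "cst R D v = cst R D v'" if v: "v \<in> vecs R 2" "v' \<in> vecs R 2" "eb v = eb v'" for v v'
    proof -
      have l: "lin R (mat_app R 2 2 E v) w = lin R (mat_app R 2 2 E v') w" if w: "w \<in> vecs R 2" for w
      proof -
        have "eb v (epsd R D E w) = eb v' (epsd R D E w)" using v by simp
        then show ?thesis unfolding eb_def using epsd_carrier[OF w] epsd_cst[OF w] v by simp
      qed
      have Ev: "mat_app R 2 2 E v \<in> vecs R 2" "mat_app R 2 2 E v' \<in> vecs R 2" using E v by auto
      have "mat_app R 2 2 E v = mat_app R 2 2 E v'"
        using vec_eq_lin[OF Ev] l[OF e(1)] l[OF e(2)] lin_comm Ev e unfolding e0_def e1_def by simp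
      then have "mat_app R 2 2 E (vadd R v (vneg R v')) = vzero R"
        using mat_app_vadd[OF E] mat_app_vneg[OF E] vadd_neg_r Ev v by simp
      then have "vadd R v (vneg R v') \<in> mat_image R 2 2 D" using kE v unfolding kerm_def by auto
      then show ?thesis using cst_eq_iff[OF D v(1,2)] by simp
    qed
  qed
qed

lemma coker_totally_reflexive: "totally_reflexive R (coker R 2 2 D)"
  unfolding totally_reflexive_def
  using coker_module[OF D] coker_fin_gen[OF D] coker_ext[OF ex] dual_ext bidual_iso by simp


end

definition qv :: "('a, 'b) ring_scheme \<Rightarrow> (nat \<Rightarrow> 'a) \<Rightarrow> (nat \<Rightarrow> 'a)" where
  "qv R v = vec2 R (v 1) (\<ominus>\<^bsub>R\<^esub> (v 0))"

context cring begin

lemma sub0: "a \<in> carrier R \<Longrightarrow> b \<in> carrier R \<Longrightarrow> a \<oplus> \<ominus> b = \<zero> \<longleftrightarrow> a = b"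
proof
  assume c: "a \<in> carrier R" "b \<in> carrier R" and h: "a \<oplus> \<ominus> b = \<zero>"
  have "a = (a \<oplus> \<ominus> b) \<oplus> b" using c by algebra
  then show "a = b" using h c by simp
next
  assume c: "a \<in> carrier R" "b \<in> carrier R" and "a = b"
  then show "a \<oplus> \<ominus> b = \<zero>" by (simp add: r_neg)
qed

lemma neg0: "t \<in> carrier R \<Longrightarrow> \<ominus> t = \<zero> \<longleftrightarrow> t = \<zero>"
  by (metis local.minus_minus local.minus_zero)

lemma qv_vec2 [simp]: "qv R (vec2 R p q) = vec2 R q (\<ominus> p)"
  unfolding qv_def by simp

lemma qv_vecs [simp]: "v \<in> vecs R 2 \<Longrightarrow> qv R v \<in> vecs R 2"
  by (elim vecs2_cases) simp

lemma qv_add: "v \<in> vecs R 2 \<Longrightarrow> w \<in> vecs R 2 \<Longrightarrow> qv R (vadd R v w) = vadd R (qv R v) (qv R w)"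
  by (elim vecs2_cases) (simp add: minus_add)

lemma qv_smult: "r \<in> carrier R \<Longrightarrow> v \<in> vecs R 2 \<Longrightarrow> qv R (vsmult R r v) = vsmult R r (qv R v)"
  by (elim vecs2_cases) (simp add: r_minus)

lemma key_K: assumes ex: "exact_zd_pair R x y" and a: "a \<in> carrier R" and v: "v \<in> vecs R 2" and v': "v' \<in> vecs R 2"
  shows "mat_app R 2 2 (mat_transpose (gamma_mat R x y a)) (qv R v) = mat_app R 2 2 (mat_transpose (gamma_mat R x y a)) (qv R v')
     \<longleftrightarrow> cst R (gamma_mat R x y a) v = cst R (gamma_mat R x y a) v'"
proof -
  have xy: "x \<in> carrier R" "y \<in> carrier R" using exact_carr[OF ex] by auto
  have E4: "exact4 R (gamma_mat R x y a) (eta_mat R x y a)" by (rule exact4_gamma[OF ex a])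
  obtain p q where pq: "p \<in> carrier R" "q \<in> carrier R" and vv: "v = vec2 R p q" using v by (rule vecs2_cases)
  obtain p' q' where pq': "p' \<in> carrier R" "q' \<in> carrier R" and vv': "v' = vec2 R p' q'" using v' by (rule vecs2_cases)
  define A where "A = x \<otimes> q" define A' where "A' = x \<otimes> q'"
  define B where "B = a \<otimes> q \<oplus> y \<otimes> \<ominus> p" define B' where "B' = a \<otimes> q' \<oplus> y \<otimes> \<ominus> p'"
  have cAB: "A \<in> carrier R" "A' \<in> carrier R" "B \<in> carrier R" "B' \<in> carrier R"
    unfolding A_def A'_def B_def B'_def using xy a pq pq' by auto
  have "mat_app R 2 2 (mat_transpose (gamma_mat R x y a)) (qv R v) = vec2 R A B"
    unfolding vv A_def B_def using gammaT_app[OF xy a] pq by simp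
  moreover have "mat_app R 2 2 (mat_transpose (gamma_mat R x y a)) (qv R v') = vec2 R A' B'"
    unfolding vv' A'_def B'_def using gammaT_app[OF xy a] pq' by simp
  ultimately have L: "mat_app R 2 2 (mat_transpose (gamma_mat R x y a)) (qv R v) = mat_app R 2 2 (mat_transpose (gamma_mat R x y a)) (qv R v')
     \<longleftrightarrow> A = A' \<and> B = B'" by simp
  have "cst R (gamma_mat R x y a) v = cst R (gamma_mat R x y a) v' \<longleftrightarrow>
        vadd R v (vneg R v') \<in> kerm R (eta_mat R x y a)"
    using cst_eq_iff[OF gamma_carrier[OF xy a] v v'] E4 unfolding exact4_def by simp
  also have "\<dots> \<longleftrightarrow> y \<otimes> (p \<oplus> \<ominus> \<one> \<otimes> p') \<oplus> \<ominus> a \<otimes> (q \<oplus> \<ominus> \<one> \<otimes> q') = \<zero> \<and> x \<otimes> (q \<oplus> \<ominus> \<one> \<otimes> q') = \<zero>"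
    unfolding kerm_def vv vv' eta_gamma using gamma_app[OF xy(2,1) a_inv_closed[OF a]] pq pq' by (simp add: vzero_vec2)
  also have "y \<otimes> (p \<oplus> \<ominus> \<one> \<otimes> p') \<oplus> \<ominus> a \<otimes> (q \<oplus> \<ominus> \<one> \<otimes> q') = \<ominus> (B \<oplus> \<ominus> B')"
    unfolding B_def B'_def using xy a pq pq' by algebra
  also have "x \<otimes> (q \<oplus> \<ominus> \<one> \<otimes> q') = A \<oplus> \<ominus> A'"
    unfolding A_def A'_def using xy a pq pq' by algebra
  finally have Rr: "cst R (gamma_mat R x y a) v = cst R (gamma_mat R x y a) v' \<longleftrightarrow> \<ominus> (B \<oplus> \<ominus> B') = \<zero> \<and> A \<oplus> \<ominus> A' = \<zero>" .
  show ?thesis unfolding L Rr using cAB sub0 neg0 by auto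
qed

lemma iso_G: assumes ex: "exact_zd_pair R x y" and a: "a \<in> carrier R"
  shows "mod_isomorphic R (coker R 2 2 (gamma_mat R x y a)) (Dual R (coker R 2 2 (eta_mat R x y a)))"
proof -
  have xy: "x \<in> carrier R" "y \<in> carrier R" using exact_carr[OF ex] by auto
  interpret X: ex4 R "eta_mat R x y a" "gamma_mat R x y a"
    by unfold_locales (rule exact4_sym[OF exact4_gamma[OF ex a]])
  let ?G = "gamma_mat R x y a" let ?H = "eta_mat R x y a"
  define eps where "eps v = epsd R ?H ?G (qv R v)" for v
  define f where "f P = eps (rep R ?G P)" for P
  have "mod_iso R (coker R 2 2 ?G) (Dual R (coker R 2 2 ?H)) f"
  proof (rule coker_iso[OF gamma_carrier[OF xy a], where eps=eps])
    show "f (cst R ?G v) = eps v" if v: "v \<in> vecs R 2" for v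
    proof -
      have r: "rep R ?G (cst R ?G v) \<in> vecs R 2" "cst R ?G (rep R ?G (cst R ?G v)) = cst R ?G v" using rep_prop[OF v] by auto
      show ?thesis unfolding f_def eps_def epsd_def using key_K[OF ex a r(1) v] r by simp
    qed
    show "eps v \<in> carrier (Dual R (coker R 2 2 ?H))" if "v \<in> vecs R 2" for v
      unfolding eps_def using X.epsd_carrier that by simp
    show "eps (vadd R v w) = eps v \<oplus>\<^bsub>Dual R (coker R 2 2 ?H)\<^esub> eps w" if "v \<in> vecs R 2" "w \<in> vecs R 2" for v w
      unfolding eps_def using that qv_add X.epsd_add by simp
    show "eps (vsmult R r v) = r \<odot>\<^bsub>Dual R (coker R 2 2 ?H)\<^esub> eps v" if "r \<in> carrier R" "v \<in> vecs R 2" for r v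
      unfolding eps_def using that qv_smult X.epsd_smult by simp
    show "\<exists>v\<in>vecs R 2. z = eps v" if zc: "z \<in> carrier (Dual R (coker R 2 2 ?H))" for z
    proof -
      obtain w where w: "w \<in> vecs R 2" "z = epsd R ?H ?G w" using X.epsd_surj zc by auto
      obtain p q where pq: "p \<in> carrier R" "q \<in> carrier R" "w = vec2 R p q" using w(1) by (rule vecs2_cases)
      have "qv R (vec2 R (\<ominus> q) p) = w" using pq by simp
      then show ?thesis unfolding eps_def using w pq by (intro bexI[where x="vec2 R (\<ominus> q) p"]) auto
    qed
    show "cst R ?G v = cst R ?G w" if "v \<in> vecs R 2" "w \<in> vecs R 2" "eps v = eps w" for v w
      using X.epsd_eq[of "qv R v" "qv R w"] that key_K[OF ex a that(1,2)] unfolding eps_def by simp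
  qed
  then show ?thesis unfolding mod_isomorphic_def by blast
qed

end

theorem proposition3p5:
  fixes R :: "('a, 'b) ring_scheme" and x y a :: 'a
  assumes "cring R" and "noetherian_ring R" and "local_ring R"
    and "exact_zd_pair R x y" and "a \<in> carrier R"
  shows "totally_reflexive R (G_mod R x y a) \<and> totally_reflexive R (H_mod R x y a) \<and>
         mod_isomorphic R (G_mod R x y a) (Dual R (H_mod R x y a)) \<and>
         mod_isomorphic R (H_mod R x y a) (Dual R (G_mod R x y a))"
proof -
  interpret cring R by fact
  note ex = assms(4) and a = assms(5)
  interpret A: ex4 R "gamma_mat R x y a" "eta_mat R x y a"
    by unfold_locales (rule exact4_gamma[OF ex a])
  interpret B: ex4 R "eta_mat R x y a" "gamma_mat R x y a"
    by unfold_locales (rule exact4_sym[OF exact4_gamma[OF ex a]])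
  have h: "\<ominus>\<^bsub>R\<^esub> (\<ominus>\<^bsub>R\<^esub> a) = a" using a by simp
  have I2: "mod_isomorphic R (coker R 2 2 (eta_mat R x y a)) (Dual R (coker R 2 2 (gamma_mat R x y a)))"
    using iso_G[OF exact_sym[OF ex] a_inv_closed[OF a]] unfolding eta_gamma h .
  show ?thesis unfolding G_mod_def H_mod_def
    using A.coker_totally_reflexive B.coker_totally_reflexive iso_G[OF ex a] I2 by simp
qed

end
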